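(* Let $q\ge3$ be a prime power and let $P\subseteq[0,q-2]^n$ and $Q\subseteq[0,q-2]^m$ be integral convex polytopes, each of which contains, up to a unimodular affine transformation, either a lattice segment of length at least $2$ (i.e. the lattice points $0,e_1,2e_1$ and the segment between them) or the unit square $[0,1]^2\times\{0\}$. Then $$(q-1)^{n+m}\leq (q-1)N(P)N(Q)+\big((q-1)^n-N(P)\big)\big((q-1)^m-N(Q)\big),$$ and consequently $$\delta(P*Q)=\min\Big\{\delta(P),\ \delta(Q),\ \delta(P)+\delta(Q)-\delta(P)\delta(Q)\tfrac{q}{q-1}\Big\}.$$
   Context: The join of $P\subseteq\mathbb{R}^n$ and $Q\subseteq\mathbb{R}^m$ is $P*Q=\mathrm{conv}\big(\{(p,\mathbf{0}^m,0):p\in P\}\cup\{(\mathbf{0}^n,y,1):y\in Q\}\big)\subseteq\mathbb{R}^{n+m+1}$. A unimodular affine transformation is a map $x\mapsto Mx+\lambda$ with $M\in GL(n,\mathbb{Z})$, $\lambda\in\mathbb{Z}^n$. For an integral convex polytope $P\subseteq[0,q-2]^n$, $\mathcal{L}_P=\mathrm{span}_{\mathbb{F}_q}\{x^p: p\in P\cap\mathbb{Z}^n\}$, $N(P)=\max_{0\neq f\in\mathcal{L}_P}|Z(f)|$ with $Z(f)$ the zero set of $f$ in $(\mathbb{F}_q^\times)^n$, and $\delta(P)=\big((q-1)^n-N(P)\big)/(q-1)^n$ with respect to the ambient dimension of the polytope. *)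

theory Defs
  imports Complex_Main "HOL-Library.Cardinality"
begin

(* Points of R^n / Z^n are represented as functions nat => real / nat => int
   that vanish at all indices >= n. *)

definition rvec :: "(nat \<Rightarrow> int) \<Rightarrow> (nat \<Rightarrow> real)" where
  "rvec p = (\<lambda>i. real_of_int (p i))"

definition rconv :: "(nat \<Rightarrow> real) set \<Rightarrow> (nat \<Rightarrow> real) set" where
  "rconv S = {x. \<exists>T u. finite T \<and> T \<subseteq> S \<and> T \<noteq> {} \<and> (\<forall>t\<in>T. 0 \<le> u t) \<and>
       sum u T = 1 \<and> (\<forall>i. x i = (\<Sum>t\<in>T. u t * t i))}"

definition int_polytope :: "nat \<Rightarrow> (nat \<Rightarrow> real) set \<Rightarrow> bool" where
  "int_polytope n P \<longleftrightarrow> (\<exists>V. finite V \<and> V \<noteq> {} \<and> (\<forall>v\<in>V. \<forall>i\<ge>n. v i = 0) \<and> P = rconv (rvec ` V))"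

definition box_n :: "nat \<Rightarrow> real \<Rightarrow> (nat \<Rightarrow> real) set" where
  "box_n n b = {x. \<forall>i. (i < n \<longrightarrow> 0 \<le> x i \<and> x i \<le> b) \<and> (n \<le> i \<longrightarrow> x i = 0)}"

definition join :: "nat \<Rightarrow> nat \<Rightarrow> (nat \<Rightarrow> real) set \<Rightarrow> (nat \<Rightarrow> real) set \<Rightarrow> (nat \<Rightarrow> real) set" where
  "join n m P Q = rconv ((\<lambda>p i. if i < n then p i else 0) ` P \<union>
      (\<lambda>y i. if i < n then 0 else if i < n + m then y (i - n) else if i = n + m then 1 else 0) ` Q)"

definition unimodular :: "nat \<Rightarrow> (nat \<Rightarrow> nat \<Rightarrow> int) \<Rightarrow> bool" where
  "unimodular n M \<longleftrightarrow> (\<exists>M'. \<forall>i<n. \<forall>j<n. (\<Sum>k<n. M i k * M' k j) = (if i = j then 1 else 0))"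

definition aff_map :: "nat \<Rightarrow> (nat \<Rightarrow> nat \<Rightarrow> int) \<Rightarrow> (nat \<Rightarrow> int) \<Rightarrow> (nat \<Rightarrow> real) \<Rightarrow> (nat \<Rightarrow> real)" where
  "aff_map n M lam x = (\<lambda>i. if i < n then (\<Sum>j<n. real_of_int (M i j) * x j) + real_of_int (lam i) else 0)"

definition unit_vec :: "nat \<Rightarrow> (nat \<Rightarrow> real)" where
  "unit_vec k = (\<lambda>i. if i = k then 1 else 0)"

definition seg2 :: "(nat \<Rightarrow> real) set" where
  "seg2 = rconv {(\<lambda>i. 0), (\<lambda>i. 2 * unit_vec 0 i)}"

definition unit_square :: "(nat \<Rightarrow> real) set" where
  "unit_square = rconv {(\<lambda>i. 0), unit_vec 0, unit_vec 1, (\<lambda>i. unit_vec 0 i + unit_vec 1 i)}"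

definition contains_seg_or_square :: "nat \<Rightarrow> (nat \<Rightarrow> real) set \<Rightarrow> bool" where
  "contains_seg_or_square n P \<longleftrightarrow> (\<exists>M lam. unimodular n M \<and> (\<forall>i\<ge>n. lam i = 0) \<and>
      ((1 \<le> n \<and> aff_map n M lam ` seg2 \<subseteq> P) \<or> (2 \<le> n \<and> aff_map n M lam ` unit_square \<subseteq> P)))"

definition lattice_pts :: "nat \<Rightarrow> (nat \<Rightarrow> real) set \<Rightarrow> (nat \<Rightarrow> int) set" where
  "lattice_pts n S = {p. (\<forall>i\<ge>n. p i = 0) \<and> rvec p \<in> S}"

definition torus :: "nat \<Rightarrow> (nat \<Rightarrow> 'a::field) set" where
  "torus n = {x. (\<forall>i<n. x i \<noteq> 0) \<and> (\<forall>i\<ge>n. x i = 0)}"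

definition monomial_eval :: "nat \<Rightarrow> (nat \<Rightarrow> int) \<Rightarrow> (nat \<Rightarrow> 'a::field) \<Rightarrow> 'a" where
  "monomial_eval n p x = (\<Prod>i<n. x i ^ nat (p i))"

definition poly_eval :: "nat \<Rightarrow> (nat \<Rightarrow> real) set \<Rightarrow> ((nat \<Rightarrow> int) \<Rightarrow> 'a::field) \<Rightarrow> (nat \<Rightarrow> 'a) \<Rightarrow> 'a" where
  "poly_eval n P c x = (\<Sum>p\<in>lattice_pts n P. c p * monomial_eval n p x)"

definition zero_set :: "nat \<Rightarrow> (nat \<Rightarrow> real) set \<Rightarrow> ((nat \<Rightarrow> int) \<Rightarrow> 'a::field) \<Rightarrow> (nat \<Rightarrow> 'a) set" where
  "zero_set n P c = {x \<in> torus n. poly_eval n P c x = 0}"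

definition max_zeros :: "'a::{finite,field} itself \<Rightarrow> nat \<Rightarrow> (nat \<Rightarrow> real) set \<Rightarrow> nat" where
  "max_zeros TYPE('a) n P =
     Max {card (zero_set n P c) | c :: (nat \<Rightarrow> int) \<Rightarrow> 'a. \<exists>p\<in>lattice_pts n P. c p \<noteq> 0}"

definition min_dist :: "'a::{finite,field} itself \<Rightarrow> nat \<Rightarrow> (nat \<Rightarrow> real) set \<Rightarrow> real" where
  "min_dist TYPE('a) n P =
     (real ((CARD('a) - 1) ^ n) - real (max_zeros TYPE('a) n P)) / real ((CARD('a) - 1) ^ n)"

end

theory Submission
  imports "Jordan_Normal_Form.Determinant" "HOL-Library.FuncSet" Defs
begin


definition ext0 :: "nat \<Rightarrow> (nat \<Rightarrow> 'b) \<Rightarrow> nat \<Rightarrow> 'b::zero" where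
  "ext0 n f = (\<lambda>i. if i < n then f i else 0)"

lemma inj_ext0: "inj_on (ext0 n) (PiE {..<n} S)"
proof (rule inj_onI)
  fix f g assume f: "f \<in> PiE {..<n} S" and g: "g \<in> PiE {..<n} S" and e: "ext0 n f = ext0 n g"
  show "f = g"
  proof
    fix i show "f i = g i"
    proof (cases "i < n")
      case True then show ?thesis using fun_cong[OF e, of i] by (simp add: ext0_def)
    next
      case False then show ?thesis using f g by (auto simp: PiE_def extensional_def)
    qed
  qed
qed

lemma torus_eq: "torus n = ext0 n ` (PiE {..<n} (\<lambda>_. UNIV - {0}))"
proof
  show "torus n \<subseteq> ext0 n ` (PiE {..<n} (\<lambda>_. UNIV - {0}))"
  proof
    fix x assume x: "x \<in> torus n"
    have "x = ext0 n (restrict x {..<n})" using x by (intro ext) (auto simp: ext0_def torus_def)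
    moreover have "restrict x {..<n} \<in> PiE {..<n} (\<lambda>_. UNIV - {0})" using x by (auto simp: torus_def)
    ultimately show "x \<in> ext0 n ` (PiE {..<n} (\<lambda>_. UNIV - {0}))" by blast
  qed
next
  show "ext0 n ` (PiE {..<n} (\<lambda>_. UNIV - {0})) \<subseteq> torus n"
    by (auto simp: torus_def ext0_def PiE_def Pi_def)
qed

lemma card_torus: "card (torus n :: (nat \<Rightarrow> 'a::{finite,field}) set) = (CARD('a) - 1)^n"
proof -
  have "card (torus n :: (nat \<Rightarrow> 'a) set) = card (PiE {..<n} (\<lambda>_. UNIV - {0::'a}))"
    unfolding torus_eq by (rule card_image) (rule inj_ext0)
  also have "\<dots> = (CARD('a) - 1)^n" by (simp add: card_PiE card_Diff_singleton)
  finally show ?thesis .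
qed

lemma finite_torus: "finite (torus n :: (nat \<Rightarrow> 'a::{finite,field}) set)"
  unfolding torus_eq by (intro finite_imageI finite_PiE) auto

lemma lattice_box:
  assumes "P \<subseteq> box_n n b" "p \<in> lattice_pts n P"
  shows "\<forall>i. (i < n \<longrightarrow> 0 \<le> p i \<and> real_of_int (p i) \<le> b) \<and> (n \<le> i \<longrightarrow> p i = 0)"
  using assms by (auto simp: lattice_pts_def box_n_def rvec_def subset_iff)

lemma finite_lattice:
  assumes "P \<subseteq> box_n n b"
  shows "finite (lattice_pts n P)"
proof -
  have "lattice_pts n P \<subseteq> ext0 n ` (PiE {..<n} (\<lambda>_. {0..ceiling b}))"
  proof
    fix p assume p: "p \<in> lattice_pts n P"
    note B = lattice_box[OF assms p]
    have "p = ext0 n (restrict p {..<n})" using B by (intro ext) (auto simp: ext0_def)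
    moreover have "restrict p {..<n} \<in> PiE {..<n} (\<lambda>_. {0..ceiling b})"
      using B by (auto simp: le_ceiling_iff ceiling_le_iff)
    ultimately show "p \<in> ext0 n ` (PiE {..<n} (\<lambda>_. {0..ceiling b}))" by blast
  qed
  moreover have "finite (ext0 n ` (PiE {..<n} (\<lambda>_. {0..ceiling b})))"
    by (intro finite_imageI finite_PiE) auto
  ultimately show ?thesis by (rule finite_subset)
qed

lemma mono_nonzero: "x \<in> torus n \<Longrightarrow> monomial_eval n p x \<noteq> (0::'a::field)"
  by (auto simp: monomial_eval_def torus_def)

lemma zero_set_sub: "zero_set n P c \<subseteq> torus n"
  by (auto simp: zero_set_def)

lemma card_zero_set_le: "card (zero_set n P (c :: _ \<Rightarrow> 'a::{finite,field})) \<le> (CARD('a) - 1)^n"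
  using card_mono[OF finite_torus zero_set_sub] card_torus by metis

lemma mz_set_fin:
  "finite {card (zero_set n P c) | c :: (nat \<Rightarrow> int) \<Rightarrow> 'a::{finite,field}. \<exists>p\<in>lattice_pts n P. c p \<noteq> 0}"
  by (rule finite_subset[of _ "{..(CARD('a) - 1)^n}"]) (auto simp del: One_nat_def intro: card_zero_set_le)

lemma mz_ge:
  fixes c :: "(nat \<Rightarrow> int) \<Rightarrow> 'a::{finite,field}"
  assumes "\<exists>p\<in>lattice_pts n P. c p \<noteq> 0"
  shows "card (zero_set n P c) \<le> max_zeros TYPE('a) n P"
  unfolding max_zeros_def by (rule Max_ge[OF mz_set_fin]) (use assms in blast)

lemma mz_ex:
  assumes "lattice_pts n P \<noteq> {}"
  shows "\<exists>c :: (nat \<Rightarrow> int) \<Rightarrow> 'a::{finite,field}. (\<exists>p\<in>lattice_pts n P. c p \<noteq> 0) \<and>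
            card (zero_set n P c) = max_zeros TYPE('a) n P"
proof -
  from assms obtain p0 where p0: "p0 \<in> lattice_pts n P" by blast
  let ?S = "{card (zero_set n P c) | c :: (nat \<Rightarrow> int) \<Rightarrow> 'a. \<exists>p\<in>lattice_pts n P. c p \<noteq> 0}"
  have "?S \<noteq> {}" using p0 by (auto intro!: exI[of _ "\<lambda>_. 1"])
  from Max_in[OF mz_set_fin this] show ?thesis unfolding max_zeros_def by auto
qed

lemma mz_le:
  assumes "lattice_pts n P \<noteq> {}"
  shows "max_zeros TYPE('a::{finite,field}) n P \<le> (CARD('a) - 1)^n"
  using mz_ex[OF assms, where 'a='a] card_zero_set_le by metis


lemma rconv_in: "x \<in> S \<Longrightarrow> x \<in> rconv S"
  unfolding rconv_def by (rule CollectI, rule exI[of _ "{x}"], rule exI[of _ "\<lambda>_. 1"]) auto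

lemma rconv_nonempty: "x \<in> rconv S \<Longrightarrow> S \<noteq> {}"
  unfolding rconv_def by auto

lemma rconv_fin:
  assumes S: "finite S" and x: "x \<in> rconv S"
  shows "\<exists>w. (\<forall>s\<in>S. 0 \<le> w s) \<and> sum w S = 1 \<and> (\<forall>i. x i = (\<Sum>s\<in>S. w s * s i))"
proof -
  from x obtain T u where T: "finite T" "T \<subseteq> S" "T \<noteq> {}" "\<forall>t\<in>T. 0 \<le> u t" "sum u T = 1"
    "\<forall>i. x i = (\<Sum>t\<in>T. u t * t i)" unfolding rconv_def by blast
  define w where "w s = (if s \<in> T then u s else 0)" for s
  have "sum w S = sum u T"
    using S T(2) by (simp add: w_def sum.If_cases Int_absorb1)
  moreover have "(\<Sum>s\<in>S. w s * s i) = (\<Sum>t\<in>T. u t * t i)" for i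
  proof -
    have "(\<Sum>s\<in>S. w s * s i) = (\<Sum>s\<in>S. if s \<in> T then u s * s i else 0)"
      by (intro sum.cong) (auto simp: w_def)
    also have "\<dots> = (\<Sum>t\<in>{s\<in>S. s \<in> T}. u t * t i)" using S by (simp add: sum.inter_filter)
    also have "{s\<in>S. s \<in> T} = T" using T(2) by auto
    finally show ?thesis .
  qed
  ultimately show ?thesis using T by (intro exI[of _ w]) (auto simp: w_def)
qed

lemma rconv_convex:
  assumes S: "finite S" and T: "finite T" "T \<subseteq> rconv S" "T \<noteq> {}"
    and u: "\<forall>t\<in>T. 0 \<le> u t" "sum u T = 1"
  shows "(\<lambda>i. \<Sum>t\<in>T. u t * t i) \<in> rconv S"
proof -
  have "\<forall>t\<in>T. \<exists>w. (\<forall>s\<in>S. 0 \<le> w s) \<and> sum w S = 1 \<and> (\<forall>i. t i = (\<Sum>s\<in>S. w s * s i))"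
    using rconv_fin[OF S] T(2) by blast
  then obtain W where W: "\<forall>t\<in>T. (\<forall>s\<in>S. 0 \<le> W t s) \<and> sum (W t) S = 1 \<and>
      (\<forall>i. t i = (\<Sum>s\<in>S. W t s * s i))" by metis
  from T obtain t0 where "t0 \<in> T" by blast
  then have Sne: "S \<noteq> {}" using T(2) rconv_nonempty by blast
  define V where "V s = (\<Sum>t\<in>T. u t * W t s)" for s
  have V0: "\<forall>s\<in>S. 0 \<le> V s" unfolding V_def using W u by (auto intro!: sum_nonneg)
  have "sum V S = (\<Sum>t\<in>T. u t * sum (W t) S)"
    unfolding V_def by (simp add: sum_distrib_left sum.swap[of _ S])
  also have "\<dots> = 1" using W u by simp
  finally have V1: "sum V S = 1" .
  have Vi: "(\<Sum>t\<in>T. u t * t i) = (\<Sum>s\<in>S. V s * s i)" for i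
  proof -
    have "(\<Sum>t\<in>T. u t * t i) = (\<Sum>t\<in>T. u t * (\<Sum>s\<in>S. W t s * s i))"
      using W by (intro sum.cong) auto
    also have "\<dots> = (\<Sum>s\<in>S. V s * s i)"
      unfolding V_def by (simp add: sum_distrib_left sum_distrib_right sum.swap[of _ S] ac_simps)
    finally show ?thesis .
  qed
  show ?thesis unfolding rconv_def
    using S Sne V0 V1 Vi by blast
qed

lemma polytope_convex:
  assumes P: "int_polytope n P" and T: "finite T" "T \<subseteq> P" "T \<noteq> {}"
    and u: "\<forall>t\<in>T. 0 \<le> u t" "sum u T = 1"
  shows "(\<lambda>i. \<Sum>t\<in>T. u t * t i) \<in> P"
proof -
  from P obtain V where V: "finite V" "P = rconv (rvec ` V)" unfolding int_polytope_def by blast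
  show ?thesis using rconv_convex[of "rvec ` V" T u] V T u by auto
qed

definition eQ :: "nat \<Rightarrow> nat \<Rightarrow> (nat \<Rightarrow> 'b) \<Rightarrow> nat \<Rightarrow> 'b::{zero,one}" where
  "eQ n m q = (\<lambda>i. if i < n then 0 else if i < n + m then q (i - n) else if i = n + m then 1 else 0)"

definition s2 :: "nat \<Rightarrow> nat \<Rightarrow> (nat \<Rightarrow> 'b) \<Rightarrow> nat \<Rightarrow> 'b::zero" where
  "s2 n m w = (\<lambda>i. if i < m then w (n + i) else 0)"

lemma rvec_eQ: "rvec (eQ n m q) = eQ n m (rvec q)"
  by (auto simp: rvec_def eQ_def)

lemma rvec_s2: "rvec (s2 n m q) = s2 n m (rvec q)"
  by (auto simp: rvec_def s2_def)

lemma s2_eQ: "(\<forall>i\<ge>m. q i = 0) \<Longrightarrow> s2 n m (eQ n m q) = q"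
  by (auto simp: s2_def eQ_def)

lemma box_zero: "P \<subseteq> box_n n b \<Longrightarrow> x \<in> P \<Longrightarrow> n \<le> i \<Longrightarrow> x i = 0"
  by (auto simp: box_n_def)

lemma join_eq:
  assumes "P \<subseteq> box_n n b"
  shows "join n m P Q = rconv (P \<union> eQ n m ` Q)"
proof -
  have "(\<lambda>p i. if i < n then p i else 0) ` P = P"
  proof -
    have "\<And>p. p \<in> P \<Longrightarrow> (\<lambda>i. if i < n then p i else (0::real)) = p"
      using box_zero[OF assms] by (auto intro!: ext)
    then show ?thesis by (simp cong: image_cong)
  qed
  then show ?thesis unfolding join_def eQ_def by simp
qed

lemma join_lattice:
  assumes P: "int_polytope n P" "P \<subseteq> box_n n b" and Q: "int_polytope m Q" "Q \<subseteq> box_n m b'"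
  shows "lattice_pts (n+m+1) (join n m P Q) = lattice_pts n P \<union> eQ n m ` lattice_pts m Q"
proof
  show "lattice_pts n P \<union> eQ n m ` lattice_pts m Q \<subseteq> lattice_pts (n+m+1) (join n m P Q)"
  proof
    fix r assume "r \<in> lattice_pts n P \<union> eQ n m ` lattice_pts m Q"
    then show "r \<in> lattice_pts (n+m+1) (join n m P Q)"
    proof
      assume r: "r \<in> lattice_pts n P"
      then show ?thesis using lattice_box[OF P(2) r] unfolding join_eq[OF P(2)]
        by (auto simp: lattice_pts_def intro!: rconv_in)
    next
      assume "r \<in> eQ n m ` lattice_pts m Q"
      then obtain q where q: "q \<in> lattice_pts m Q" "r = eQ n m q" by blast
      have "rvec r \<in> eQ n m ` Q" using q by (auto simp: rvec_eQ lattice_pts_def)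
      moreover have "\<forall>i\<ge>n+m+1. r i = 0" using q by (simp add: eQ_def)
      ultimately show ?thesis unfolding join_eq[OF P(2)]
        by (auto simp: lattice_pts_def intro!: rconv_in)
    qed
  qed
next
  show "lattice_pts (n+m+1) (join n m P Q) \<subseteq> lattice_pts n P \<union> eQ n m ` lattice_pts m Q"
  proof
    fix r assume r: "r \<in> lattice_pts (n+m+1) (join n m P Q)"
    then have r0: "\<forall>i\<ge>n+m+1. r i = 0" and rj: "rvec r \<in> rconv (P \<union> eQ n m ` Q)"
      unfolding lattice_pts_def join_eq[OF P(2)] by auto
    from rj obtain T u where T: "finite T" "T \<subseteq> P \<union> eQ n m ` Q" "T \<noteq> {}" "\<forall>t\<in>T. 0 \<le> u t"
      "sum u T = 1" "\<forall>i. rvec r i = (\<Sum>t\<in>T. u t * t i)" unfolding rconv_def by blast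
    define TP where "TP = T \<inter> P"
    define TQ where "TQ = T - P"
    have TQsub: "TQ \<subseteq> eQ n m ` Q" using T(2) by (auto simp: TQ_def)
    have disj: "TP \<inter> TQ = {}" "T = TP \<union> TQ" by (auto simp: TP_def TQ_def)
    have finP: "finite TP" "finite TQ" using T(1) by (auto simp: TP_def TQ_def)
    have sumT: "sum f T = sum f TP + sum f TQ" for f :: "_ \<Rightarrow> real"
      using finP disj by (simp add: sum.union_disjoint)
    have zP: "t (n+m) = 0" if "t \<in> TP" for t
      using that box_zero[OF P(2)] by (auto simp: TP_def)
    have zQ: "t (n+m) = 1" if "t \<in> TQ" for t
      using that TQsub by (auto simp: eQ_def)
    have z1: "(\<Sum>t\<in>TP. u t * t (n+m)) = 0" using zP by (intro sum.neutral) simp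
    have z2: "(\<Sum>t\<in>TQ. u t * t (n+m)) = sum u TQ" using zQ by (intro sum.cong) simp_all
    have z: "rvec r (n+m) = sum u TQ"
      using T(6) sumT[of "\<lambda>t. u t * t (n+m)"] z1 z2 by simp
    have uP: "sum u TP \<ge> 0" "sum u TQ \<ge> 0" using T(4) by (auto simp: TP_def TQ_def intro!: sum_nonneg)
    have u1: "sum u TP + sum u TQ = 1" using sumT[of u] T(5) by simp
    have "real_of_int (r (n+m)) \<ge> 0" "real_of_int (r (n+m)) \<le> 1"
      using z uP u1 by (auto simp: rvec_def)
    then have "r (n+m) = 0 \<or> r (n+m) = 1" by linarith
    then show "r \<in> lattice_pts n P \<union> eQ n m ` lattice_pts m Q"
    proof
      assume r0': "r (n+m) = 0"
      then have "sum u TQ = 0" using z by (simp add: rvec_def)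
      then have uQ0: "\<forall>t\<in>TQ. u t = 0" using sum_nonneg_eq_0_iff[of TQ u] finP T(4) by (auto simp: TQ_def)
      have sP: "sum u TP = 1" using u1 \<open>sum u TQ = 0\<close> by simp
      then have "TP \<noteq> {}" by auto
      have "rvec r = (\<lambda>i. \<Sum>t\<in>TP. u t * t i)"
        using T(6) sumT uQ0 by (auto intro!: ext)
      moreover have "(\<lambda>i. \<Sum>t\<in>TP. u t * t i) \<in> P"
        by (rule polytope_convex[OF P(1) finP(1)]) (use \<open>TP \<noteq> {}\<close> sP T(4) in \<open>auto simp: TP_def\<close>)
      ultimately have "rvec r \<in> P" by simp
      moreover have "r i = 0" if "n \<le> i" for i
        using box_zero[OF P(2) \<open>rvec r \<in> P\<close> that] by (simp add: rvec_def)
      ultimately have "r \<in> lattice_pts n P"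
        by (auto simp: lattice_pts_def)
      then show ?thesis by blast
    next
      assume r1: "r (n+m) = 1"
      then have "sum u TQ = 1" using z by (simp add: rvec_def)
      then have "sum u TP = 0" using u1 by simp
      then have uP0: "\<forall>t\<in>TP. u t = 0" using sum_nonneg_eq_0_iff[of TP u] finP T(4) by (auto simp: TP_def)
      have "TQ \<noteq> {}" using \<open>sum u TQ = 1\<close> by auto
      have rv: "rvec r i = (\<Sum>t\<in>TQ. u t * t i)" for i
        using T(6) sumT uP0 by auto
      have tQ: "s2 n m t \<in> Q \<and> eQ n m (s2 n m t) = t" if "t \<in> TQ" for t
      proof -
        from that TQsub obtain y where y: "y \<in> Q" "t = eQ n m y" by blast
        have "s2 n m t = y" using y box_zero[OF Q(2) y(1)] by (simp add: s2_eQ)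
        then show ?thesis using y by simp
      qed
      have inj: "inj_on (s2 n m) TQ" by (rule inj_on_inverseI[of _ "eQ n m"]) (use tQ in auto)
      have sumre: "(\<Sum>q\<in>s2 n m ` TQ. f q) = (\<Sum>t\<in>TQ. f (s2 n m t))" for f :: "_ \<Rightarrow> real"
        by (rule sum.reindex[OF inj, unfolded comp_def])
      define u' where "u' q = u (eQ n m q)" for q
      have ys: "(\<lambda>i. \<Sum>q\<in>s2 n m ` TQ. u' q * q i) \<in> Q"
      proof (rule polytope_convex[OF Q(1)])
        show "finite (s2 n m ` TQ)" using finP by simp
        show "s2 n m ` TQ \<subseteq> Q" using tQ by auto
        show "s2 n m ` TQ \<noteq> {}" using \<open>TQ \<noteq> {}\<close> by simp
        show "\<forall>t\<in>s2 n m ` TQ. 0 \<le> u' t" using tQ T(4) by (auto simp: u'_def TQ_def)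
        show "sum u' (s2 n m ` TQ) = 1" unfolding sumre u'_def
          using tQ \<open>sum u TQ = 1\<close> by (simp cong: sum.cong)
      qed
      have yeq: "(\<lambda>i. \<Sum>q\<in>s2 n m ` TQ. u' q * q i) = rvec (s2 n m r)"
      proof
        fix i show "(\<Sum>q\<in>s2 n m ` TQ. u' q * q i) = rvec (s2 n m r) i"
        proof (cases "i < m")
          case True
          have "(\<Sum>q\<in>s2 n m ` TQ. u' q * q i) = (\<Sum>t\<in>TQ. u t * t (n+i))"
            unfolding sumre u'_def using tQ True by (intro sum.cong) (auto simp: s2_def)
          then show ?thesis using rv[of "n+i"] True by (simp add: rvec_def s2_def)
        next
          case False
          have "(\<Sum>q\<in>s2 n m ` TQ. u' q * q i) = 0"
            using tQ False box_zero[OF Q(2)] by (intro sum.neutral) auto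
          then show ?thesis using False by (simp add: rvec_def s2_def)
        qed
      qed
      have lq: "s2 n m r \<in> lattice_pts m Q"
        using ys yeq by (auto simp: lattice_pts_def s2_def)
      have "r = eQ n m (s2 n m r)"
      proof
        fix i
        show "r i = eQ n m (s2 n m r) i"
        proof (cases "i < n")
          case True
          have "rvec r i = 0" using rv[of i] tQ True by (intro trans[OF rv sum.neutral]) (metis eQ_def mult_zero_right)
          then show ?thesis using True by (simp add: rvec_def eQ_def)
        next
          case False
          then show ?thesis using r0 r1 by (auto simp: eQ_def s2_def)
        qed
      qed
      then show ?thesis using lq by blast
    qed
  qed
qed


lemma card_z_set:
  fixes a b :: "'a::{finite,field}"
  shows "card {z. z \<noteq> 0 \<and> a + z * b = 0} =
     (if a = 0 \<and> b = 0 then CARD('a) - 1 else if a \<noteq> 0 \<and> b \<noteq> 0 then 1 else 0)"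
proof (cases "b = 0")
  case True
  then show ?thesis
  proof (cases "a = 0")
    case True
    have "{z::'a. z \<noteq> 0} = UNIV - {0}" by auto
    then show ?thesis using True \<open>b = 0\<close> by (simp add: card_Diff_singleton)
  qed simp
next
  case False
  have "{z. z \<noteq> 0 \<and> a + z * b = 0} = (if a = 0 then {} else {- a / b})"
    using False by (auto simp: field_simps eq_neg_iff_add_eq_0)
  then show ?thesis using False by simp
qed

lemma count3:
  fixes g :: "'x \<Rightarrow> 'a::{finite,field}" and h :: "'y \<Rightarrow> 'a"
  assumes X: "finite X" and Y: "finite Y"
  shows "card {((x,y),z). x \<in> X \<and> y \<in> Y \<and> z \<noteq> 0 \<and> g x + z * h y = 0} =
     (CARD('a) - 1) * card {x\<in>X. g x = 0} * card {y\<in>Y. h y = 0}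
     + card {x\<in>X. g x \<noteq> 0} * card {y\<in>Y. h y \<noteq> 0}"
proof -
  let ?T = "CARD('a) - 1"
  have eq: "{((x,y),z). x \<in> X \<and> y \<in> Y \<and> z \<noteq> 0 \<and> g x + z * h y = 0} =
     Sigma (X \<times> Y) (\<lambda>(x,y). {z. z \<noteq> 0 \<and> g x + z * h y = 0})" by auto
  have "card (Sigma (X \<times> Y) (\<lambda>(x,y). {z. z \<noteq> 0 \<and> g x + z * h y = 0}))
     = (\<Sum>(x,y)\<in>X \<times> Y. card {z. z \<noteq> 0 \<and> g x + z * h y = 0})"
    using X Y by (subst card_SigmaI) (auto simp: case_prod_beta)
  also have "\<dots> = (\<Sum>(x,y)\<in>X \<times> Y. (if g x = 0 then ?T * (if h y = 0 then 1 else 0)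
        else (if h y \<noteq> 0 then 1 else 0)))"
    by (intro sum.cong refl) (auto simp: card_z_set)
  also have "\<dots> = (\<Sum>x\<in>X. \<Sum>y\<in>Y. (if g x = 0 then ?T * (if h y = 0 then 1 else 0)
        else (if h y \<noteq> 0 then 1 else 0)))"
    by (simp add: sum.cartesian_product)
  also have "\<dots> = (\<Sum>x\<in>X. (if g x = 0 then ?T * card {y\<in>Y. h y = 0}
        else card {y\<in>Y. h y \<noteq> 0}))"
  proof (intro sum.cong refl)
    fix x
    have c1: "(\<Sum>y\<in>Y. (if h y = 0 then 1 else 0::nat)) = card {y\<in>Y. h y = 0}"
      using Y by (simp add: sum.If_cases Int_def)
    have c2: "(\<Sum>y\<in>Y. (if h y \<noteq> 0 then 1 else 0::nat)) = card {y\<in>Y. h y \<noteq> 0}"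
      using Y by (simp add: sum.If_cases Int_def)
    show "(\<Sum>y\<in>Y. (if g x = 0 then ?T * (if h y = 0 then 1 else 0)
        else (if h y \<noteq> 0 then 1 else 0))) = (if g x = 0 then ?T * card {y\<in>Y. h y = 0}
        else card {y\<in>Y. h y \<noteq> 0})"
      using c1 c2 by (simp add: sum_distrib_left[symmetric])
  qed
  also have "\<dots> = card {x\<in>X. g x = 0} * (?T * card {y\<in>Y. h y = 0})
        + card {x\<in>X. g x \<noteq> 0} * card {y\<in>Y. h y \<noteq> 0}"
    using X by (simp add: sum.If_cases Int_def)
  finally show ?thesis unfolding eq by (simp add: ac_simps)
qed


lemma mono_ext:
  assumes "\<forall>i\<ge>n. p i = 0" "n \<le> N"
  shows "monomial_eval N p w = monomial_eval n p (w :: nat \<Rightarrow> 'a::field)"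
proof -
  have "(\<Prod>i<n. w i ^ nat (p i)) = (\<Prod>i<N. w i ^ nat (p i))"
    by (rule prod.mono_neutral_left) (use assms in auto)
  moreover have "(\<Prod>i<n. w i ^ nat (p i)) = (\<Prod>i<n. ext0 n w i ^ nat (p i))"
    by (intro prod.cong) (auto simp: ext0_def)
  ultimately show ?thesis unfolding monomial_eval_def by simp
qed

lemma mono_ext0: "monomial_eval n p (ext0 n w) = monomial_eval n p (w :: nat \<Rightarrow> 'a::field)"
  unfolding monomial_eval_def by (intro prod.cong) (auto simp: ext0_def)

lemma lessThan_split: "{..<n+m} = {..<n::nat} \<union> (\<lambda>j. n + j) ` {..<m}"
proof -
  have "i \<in> {..<n} \<union> (\<lambda>j. n+j) ` {..<m}" if "i < n+m" for i
  proof (cases "i<n")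
    case True thus ?thesis by simp
  next
    case False
    then have "i = n + (i-n)" "i - n < m" using that by auto
    then show ?thesis by (metis UnI2 imageI lessThan_iff)
  qed
  moreover have "x \<in> {..<n+m}" if "x \<in> {..<n} \<union> (\<lambda>j. n+j) ` {..<m}" for x using that by auto
  ultimately show ?thesis by blast
qed

lemma mono_eQ:
  assumes "\<forall>i\<ge>m. q i = 0"
  shows "monomial_eval (n+m+1) (eQ n m q) w = monomial_eval m q (s2 n m w) * (w :: nat \<Rightarrow> 'a::field) (n+m)"
proof -
  have "(\<Prod>i<n+m+1. w i ^ nat (eQ n m q i)) = (\<Prod>i<n+m. w i ^ nat (eQ n m q i)) * w (n+m)"
    by (simp add: eQ_def)
  also have "(\<Prod>i<n+m. w i ^ nat (eQ n m q i)) =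
      (\<Prod>i<n. w i ^ nat (eQ n m q i)) * (\<Prod>i\<in>(\<lambda>j. n + j) ` {..<m}. w i ^ nat (eQ n m q i))"
    unfolding lessThan_split by (rule prod.union_disjoint) auto
  also have "(\<Prod>i<n. w i ^ nat (eQ n m q i)) = 1" by (intro prod.neutral) (auto simp: eQ_def)
  also have "(\<Prod>i\<in>(\<lambda>j. n + j) ` {..<m}. w i ^ nat (eQ n m q i)) = (\<Prod>j<m. w (n+j) ^ nat (eQ n m q (n+j)))"
    by (subst prod.reindex) (auto simp: inj_on_def)
  also have "\<dots> = monomial_eval m q (s2 n m w)"
    unfolding monomial_eval_def by (intro prod.cong) (auto simp: eQ_def s2_def)
  finally show ?thesis unfolding monomial_eval_def by simp
qed

lemma inj_eQ: "inj_on (eQ n m) {q. \<forall>i\<ge>m. q i = 0}"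
  by (rule inj_on_inverseI[of _ "s2 n m"]) (auto simp: s2_eQ)

lemma join_poly:
  fixes c :: "(nat \<Rightarrow> int) \<Rightarrow> 'a::field"
  assumes P: "int_polytope n P" "P \<subseteq> box_n n b" and Q: "int_polytope m Q" "Q \<subseteq> box_n m b'"
  shows "poly_eval (n+m+1) (join n m P Q) c w =
     poly_eval n P c (ext0 n w) + w (n+m) * poly_eval m Q (c \<circ> eQ n m) (s2 n m w)"
proof -
  let ?LP = "lattice_pts n P" and ?LQ = "lattice_pts m Q"
  have fin: "finite ?LP" "finite ?LQ" using finite_lattice P(2) Q(2) by blast+
  have zP: "\<forall>i\<ge>n. p i = 0" if "p \<in> ?LP" for p using lattice_box[OF P(2) that] by auto
  have zQ: "\<forall>i\<ge>m. q i = 0" if "q \<in> ?LQ" for q using lattice_box[OF Q(2) that] by auto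
  have inj: "inj_on (eQ n m) ?LQ" using inj_on_subset[OF inj_eQ] zQ by blast
  have disj: "?LP \<inter> eQ n m ` ?LQ = {}"
  proof (rule ccontr)
    assume "?LP \<inter> eQ n m ` ?LQ \<noteq> {}"
    then obtain r q where r: "r \<in> ?LP" "r = eQ n m q" by blast
    then have "r (n+m) = 1" by (simp add: eQ_def)
    moreover have "r (n+m) = 0" using zP[OF r(1)] by simp
    ultimately show False by simp
  qed
  have "poly_eval (n+m+1) (join n m P Q) c w =
     (\<Sum>p\<in>?LP. c p * monomial_eval (n+m+1) p w) + (\<Sum>r\<in>eQ n m ` ?LQ. c r * monomial_eval (n+m+1) r w)"
    unfolding poly_eval_def join_lattice[OF P Q] using fin disj by (simp add: sum.union_disjoint)
  also have "(\<Sum>p\<in>?LP. c p * monomial_eval (n+m+1) p w) = poly_eval n P c (ext0 n w)"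
    unfolding poly_eval_def mono_ext0 using zP by (intro sum.cong refl) (simp add: mono_ext)
  also have "(\<Sum>r\<in>eQ n m ` ?LQ. c r * monomial_eval (n+m+1) r w) =
      (\<Sum>q\<in>?LQ. c (eQ n m q) * monomial_eval (n+m+1) (eQ n m q) w)"
    by (rule sum.reindex[OF inj, unfolded comp_def])
  also have "\<dots> = w (n+m) * poly_eval m Q (c \<circ> eQ n m) (s2 n m w)"
    unfolding poly_eval_def sum_distrib_left
  proof (intro sum.cong refl)
    fix q assume "q \<in> ?LQ"
    show "c (eQ n m q) * monomial_eval (n+m+1) (eQ n m q) w = w (n+m) * ((c \<circ> eQ n m) q * monomial_eval m q (s2 n m w))"
      by (simp only: mono_eQ[OF zQ[OF \<open>q \<in> ?LQ\<close>]] comp_def) (simp add: ac_simps)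
  qed
  finally show ?thesis .
qed


definition psi :: "nat \<Rightarrow> nat \<Rightarrow> ((nat \<Rightarrow> 'b) \<times> (nat \<Rightarrow> 'b)) \<times> 'b \<Rightarrow> nat \<Rightarrow> 'b::zero" where
  "psi n m t = (\<lambda>i. if i < n then fst (fst t) i else if i < n + m then snd (fst t) (i - n)
      else if i = n + m then snd t else 0)"

lemma psi_phi:
  assumes "w \<in> torus (n+m+1)"
  shows "psi n m ((ext0 n w, s2 n m w), w (n+m)) = w"
proof
  fix i
  have z: "\<forall>i\<ge>n+m+1. w i = 0" using assms by (simp add: torus_def)
  show "psi n m ((ext0 n w, s2 n m w), w (n+m)) i = w i"
  proof (cases "i < n")
    case True then show ?thesis by (simp add: psi_def ext0_def)
  next
    case False
    then show ?thesis using z by (cases "i < n + m") (auto simp: psi_def s2_def)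
  qed
qed

lemma phi_psi:
  "((ext0 n (psi n m ((x,y),z)), s2 n m (psi n m ((x,y),z))), psi n m ((x,y),z) (n+m)) = ((x,y),z)"
  if "x \<in> torus n" "y \<in> torus m"
proof -
  have "ext0 n (psi n m ((x,y),z)) = x"
  proof
    fix i show "ext0 n (psi n m ((x, y), z)) i = x i"
      using that by (cases "i < n") (auto simp: ext0_def psi_def torus_def)
  qed
  moreover have "s2 n m (psi n m ((x,y),z)) = y"
  proof
    fix i show "s2 n m (psi n m ((x, y), z)) i = y i"
      using that by (cases "i < m") (auto simp: s2_def psi_def torus_def)
  qed
  ultimately show ?thesis by (simp add: psi_def)
qed

lemma psi_torus:
  "x \<in> torus n \<Longrightarrow> y \<in> torus m \<Longrightarrow> z \<noteq> 0 \<Longrightarrow> psi n m ((x,y),z) \<in> torus (n+m+1)"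
  unfolding torus_def psi_def by auto

lemma phi_torus:
  "w \<in> torus (n+m+1) \<Longrightarrow> ext0 n w \<in> torus n \<and> s2 n m w \<in> torus m \<and> w (n+m) \<noteq> 0"
  unfolding torus_def ext0_def s2_def by auto

lemma card_join_torus:
  fixes G H :: "(nat \<Rightarrow> 'a::{finite,field}) \<Rightarrow> 'a"
  shows "card {w \<in> torus (n+m+1). G (ext0 n w) + w (n+m) * H (s2 n m w) = 0} =
    card {((x,y),z). x \<in> torus n \<and> y \<in> torus m \<and> z \<noteq> 0 \<and> G x + z * H y = 0}"
proof -
  define phi where "phi w = ((ext0 n w, s2 n m w), w (n+m))" for w :: "nat \<Rightarrow> 'a"
  let ?A = "{w \<in> torus (n+m+1). G (ext0 n w) + w (n+m) * H (s2 n m w) = 0}"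
  let ?B = "{((x,y),z). x \<in> torus n \<and> y \<in> torus m \<and> z \<noteq> 0 \<and> G x + z * H y = 0}"
  have inj: "inj_on phi ?A"
    by (rule inj_on_inverseI[of _ "psi n m"]) (simp add: phi_def psi_phi)
  moreover have im: "phi ` ?A = ?B"
  proof
    show "phi ` ?A \<subseteq> ?B"
    proof
      fix t assume "t \<in> phi ` ?A"
      then obtain w where w: "w \<in> ?A" "t = phi w" by (rule imageE) simp
      have w1: "w \<in> torus (n+m+1)" "G (ext0 n w) + w (n+m) * H (s2 n m w) = 0" using w(1) by simp_all
      note pt = phi_torus[OF w1(1)]
      have "phi w \<in> ?B" unfolding phi_def using pt w1(2) by simp
      then show "t \<in> ?B" using w(2) by simp
    qed
  next
    show "?B \<subseteq> phi ` ?A"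
    proof
      fix t assume tB: "t \<in> ?B"
      define x where "x = fst (fst t)"
      define y where "y = snd (fst t)"
      define z where "z = snd t"
      have tt: "t = ((x,y),z)" by (simp add: x_def y_def z_def)
      have t: "x \<in> torus n" "y \<in> torus m" "z \<noteq> 0" "G x + z * H y = 0"
        using tB unfolding tt by simp_all
      have pp: "((ext0 n (psi n m ((x,y),z)), s2 n m (psi n m ((x,y),z))), psi n m ((x,y),z) (n+m)) = ((x,y),z)"
        by (rule phi_psi[OF t(1) t(2)])
      have e1: "ext0 n (psi n m ((x,y),z)) = x" using pp by simp
      have e2: "s2 n m (psi n m ((x,y),z)) = y" using pp by simp
      have e3: "psi n m ((x,y),z) (n+m) = z" using pp by simp
      have e: "phi (psi n m ((x,y),z)) = t" unfolding phi_def tt using pp .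
      have tor: "psi n m ((x,y),z) \<in> torus (n+m+1)" by (rule psi_torus[OF t(1-3)])
      have g: "G (ext0 n (psi n m ((x,y),z))) + psi n m ((x,y),z) (n+m) * H (s2 n m (psi n m ((x,y),z))) = 0"
        unfolding e1 e2 e3 by (rule t(4))
      have "psi n m ((x,y),z) \<in> ?A" using tor g by blast
      then show "t \<in> phi ` ?A" by (rule image_eqI[of t phi "psi n m ((x,y),z)", OF e[symmetric]])
    qed
  qed
  show ?thesis using card_image[OF inj] im by simp
qed

lemma join_count:
  fixes c :: "(nat \<Rightarrow> int) \<Rightarrow> 'a::{finite,field}"
  assumes P: "int_polytope n P" "P \<subseteq> box_n n b" and Q: "int_polytope m Q" "Q \<subseteq> box_n m b'"
  shows "card (zero_set (n+m+1) (join n m P Q) c) =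
    (CARD('a) - 1) * card (zero_set n P c) * card (zero_set m Q (c \<circ> eQ n m))
    + ((CARD('a) - 1)^n - card (zero_set n P c)) * ((CARD('a) - 1)^m - card (zero_set m Q (c \<circ> eQ n m)))"
proof -
  let ?G = "poly_eval n P c" and ?H = "poly_eval m Q (c \<circ> eQ n m)"
  have "zero_set (n+m+1) (join n m P Q) c = {w \<in> torus (n+m+1). ?G (ext0 n w) + w (n+m) * ?H (s2 n m w) = 0}"
    unfolding zero_set_def join_poly[OF P Q] ..
  then have "card (zero_set (n+m+1) (join n m P Q) c) =
     card {((x,y),z). x \<in> torus n \<and> y \<in> torus m \<and> z \<noteq> 0 \<and> ?G x + z * ?H y = 0}"
    by (simp only: card_join_torus)
  also have "\<dots> = (CARD('a) - 1) * card {x\<in>torus n. ?G x = 0} * card {y\<in>torus m. ?H y = 0}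
     + card {x\<in>torus n. ?G x \<noteq> 0} * card {y\<in>torus m. ?H y \<noteq> 0}"
    by (rule count3[OF finite_torus finite_torus])
  also have "{x\<in>torus n. ?G x = 0} = zero_set n P c" by (simp add: zero_set_def)
  also have "{y\<in>torus m. ?H y = 0} = zero_set m Q (c \<circ> eQ n m)" by (simp add: zero_set_def)
  also have "card {x\<in>torus n. ?G x \<noteq> 0} = (CARD('a) - 1)^n - card (zero_set n P c)"
  proof -
    have "{x\<in>torus n. ?G x \<noteq> 0} = torus n - zero_set n P c" by (auto simp: zero_set_def)
    then show ?thesis using card_Diff_subset[OF finite_subset[OF zero_set_sub finite_torus] zero_set_sub]
      card_torus by metis
  qed
  also have "card {y\<in>torus m. ?H y \<noteq> 0} = (CARD('a) - 1)^m - card (zero_set m Q (c \<circ> eQ n m))"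
  proof -
    have "{y\<in>torus m. ?H y \<noteq> 0} = torus m - zero_set m Q (c \<circ> eQ n m)" by (auto simp: zero_set_def)
    then show ?thesis using card_Diff_subset[OF finite_subset[OF zero_set_sub finite_torus] zero_set_sub]
      card_torus by metis
  qed
  finally show ?thesis .
qed


lemma unimod_left_inv:
  assumes "unimodular n M"
  shows "\<exists>M'. \<forall>i<n. \<forall>j<n. (\<Sum>k<n. real_of_int (M' i k) * real_of_int (M k j)) = (if i = j then 1 else 0)"
proof -
  from assms obtain M' where M': "\<forall>i<n. \<forall>j<n. (\<Sum>k<n. M i k * M' k j) = (if i = j then 1 else 0)"
    unfolding unimodular_def by blast
  define A where "A = mat n n (\<lambda>(i,j). real_of_int (M i j))"
  define B where "B = mat n n (\<lambda>(i,j). real_of_int (M' i j))"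
  have AB: "A * B = 1\<^sub>m n"
  proof (rule eq_matI)
    fix i j assume ij: "i < dim_row (1\<^sub>m n :: real mat)" "j < dim_col (1\<^sub>m n :: real mat)"
    then have "i < n" "j < n" by auto
    have "(A * B) $$ (i,j) = (\<Sum>k<n. real_of_int (M i k) * real_of_int (M' k j))"
      using \<open>i<n\<close> \<open>j<n\<close> by (simp add: A_def B_def scalar_prod_def lessThan_atLeast0)
    also have "\<dots> = real_of_int (\<Sum>k<n. M i k * M' k j)" by simp
    also have "\<dots> = (if i = j then 1 else 0)" using M' \<open>i<n\<close> \<open>j<n\<close> by simp
    finally show "(A * B) $$ (i,j) = 1\<^sub>m n $$ (i,j)" using \<open>i<n\<close> \<open>j<n\<close> by simp
  qed (auto simp: A_def B_def)
  have BA: "B * A = 1\<^sub>m n"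
    by (rule mat_mult_left_right_inverse[OF _ _ AB]) (auto simp: A_def B_def)
  show ?thesis
  proof (intro exI[of _ M'] allI impI)
    fix i j assume "i < n" "j < n"
    have "(B * A) $$ (i,j) = (\<Sum>k<n. real_of_int (M' i k) * real_of_int (M k j))"
      using \<open>i<n\<close> \<open>j<n\<close> by (simp add: A_def B_def scalar_prod_def lessThan_atLeast0)
    then show "(\<Sum>k<n. real_of_int (M' i k) * real_of_int (M k j)) = (if i = j then 1 else 0)"
      using BA \<open>i<n\<close> \<open>j<n\<close> by simp
  qed
qed

lemma unimod_inj:
  assumes "unimodular n M" "\<forall>i<n. (\<Sum>j<n. real_of_int (M i j) * x j) = 0" "k < n"
  shows "x k = 0"
proof -
  obtain M' where M': "\<forall>i<n. \<forall>j<n. (\<Sum>l<n. real_of_int (M' i l) * real_of_int (M l j)) = (if i = j then 1 else 0)"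
    using unimod_left_inv[OF assms(1)] by blast
  have "(\<Sum>j<n. (if k = j then 1 else 0) * x j) = (\<Sum>j<n. if k = j then x j else 0)"
    by (intro sum.cong) auto
  also have "\<dots> = x k" using assms(3) by simp
  finally have "x k = (\<Sum>j<n. (if k = j then 1 else 0) * x j)" ..
  also have "\<dots> = (\<Sum>j<n. (\<Sum>l<n. real_of_int (M' k l) * real_of_int (M l j)) * x j)"
    using M' assms(3) by (intro sum.cong) auto
  also have "\<dots> = (\<Sum>j<n. \<Sum>l<n. real_of_int (M' k l) * (real_of_int (M l j) * x j))"
    by (simp only: sum_distrib_right mult.assoc)
  also have "\<dots> = (\<Sum>l<n. \<Sum>j<n. real_of_int (M' k l) * (real_of_int (M l j) * x j))"
    by (rule sum.swap)
  also have "\<dots> = (\<Sum>l<n. real_of_int (M' k l) * (\<Sum>j<n. real_of_int (M l j) * x j))"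
    by (simp only: sum_distrib_left)
  also have "\<dots> = 0" using assms(2) by simp
  finally show ?thesis .
qed


lemma card_filter_sum: "finite X \<Longrightarrow> card {x\<in>X. P x} = (\<Sum>x\<in>X. if P x then 1 else (0::nat))"
  by (simp add: sum.If_cases Int_def)

lemma avg:
  assumes D: "finite D" "D \<noteq> {}" and X: "finite X"
    and k: "\<forall>x\<in>X. k \<le> card {d\<in>D. R d x}"
  shows "\<exists>d\<in>D. k * card X \<le> card D * card {x\<in>X. R d x}"
proof (rule ccontr)
  assume "\<not> ?thesis"
  then have lt: "\<forall>d\<in>D. card D * card {x\<in>X. R d x} < k * card X" by (simp add: not_le)
  have "(\<Sum>d\<in>D. card {x\<in>X. R d x}) = (\<Sum>d\<in>D. \<Sum>x\<in>X. if R d x then 1 else (0::nat))"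
    using X by (simp add: card_filter_sum)
  also have "\<dots> = (\<Sum>x\<in>X. \<Sum>d\<in>D. if R d x then 1 else (0::nat))" by (rule sum.swap)
  also have "\<dots> = (\<Sum>x\<in>X. card {d\<in>D. R d x})" using D by (simp add: card_filter_sum)
  also have "\<dots> \<ge> (\<Sum>x\<in>X. k)" using k by (intro sum_mono) auto
  finally have ge: "k * card X \<le> (\<Sum>d\<in>D. card {x\<in>X. R d x})" by (simp add: mult.commute)
  have "card D * (\<Sum>d\<in>D. card {x\<in>X. R d x}) = (\<Sum>d\<in>D. card D * card {x\<in>X. R d x})"
    by (simp add: sum_distrib_left)
  also have "\<dots> < (\<Sum>d\<in>D. k * card X)" using lt D by (intro sum_strict_mono) auto
  also have "\<dots> = card D * (k * card X)" by simp
  finally have "(\<Sum>d\<in>D. card {x\<in>X. R d x}) < k * card X" by simp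
  with ge show False by simp
qed

lemma exists_gamma: "CARD('a::{finite,field}) \<ge> 3 \<Longrightarrow> \<exists>g::'a. g \<noteq> 0 \<and> g \<noteq> 1"
proof (rule ccontr)
  assume c: "CARD('a) \<ge> 3" "\<not> (\<exists>g::'a. g \<noteq> 0 \<and> g \<noteq> 1)"
  then have "(UNIV::'a set) \<subseteq> {0,1}" by auto
  then have "CARD('a) \<le> card {0::'a,1}" by (rule card_mono[rotated]) simp
  also have "\<dots> \<le> 2" by (rule card_insert_le_m1) simp_all
  finally show False using c by simp
qed

lemma seg_bound:
  fixes P :: "(nat \<Rightarrow> real) set"
  assumes q3: "CARD('a::{finite,field}) \<ge> 3" and L: "finite (lattice_pts n P)"
    and pts: "p0 \<in> lattice_pts n P" "p1 \<in> lattice_pts n P" "p2 \<in> lattice_pts n P"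
    and dist: "p0 \<noteq> p1" "p0 \<noteq> p2" "p1 \<noteq> p2"
    and rel: "\<forall>x\<in>torus n. monomial_eval n p0 x * monomial_eval n p2 x =
                 monomial_eval n p1 x * (monomial_eval n p1 (x :: nat \<Rightarrow> 'a))"
  shows "2 * (CARD('a) - 1)^n \<le> (CARD('a) - 1) * max_zeros TYPE('a) n P"
proof -
  let ?T = "CARD('a) - 1"
  obtain g :: 'a where g: "g \<noteq> 0" "g \<noteq> 1" using exists_gamma[OF q3] by blast
  define u where "u x = monomial_eval n p1 x / monomial_eval n p0 x" for x :: "nat \<Rightarrow> 'a"
  have u0: "u x \<noteq> 0" if "x \<in> torus n" for x using mono_nonzero[OF that] by (simp add: u_def)
  define D where "D = (UNIV :: 'a set) - {0}"
  have cD: "card D = ?T" by (simp add: D_def card_Diff_singleton)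
  have k: "\<forall>x\<in>(torus n :: (nat \<Rightarrow> 'a) set). 2 \<le> card {a\<in>D. u x = a \<or> u x = g * a}"
  proof
    fix x :: "nat \<Rightarrow> 'a" assume x: "x \<in> torus n"
    let ?v = "u x"
    have "{a\<in>D. ?v = a \<or> ?v = g * a} = {?v, ?v / g}"
      using u0[OF x] g by (auto simp: D_def field_simps)
    moreover have "?v \<noteq> ?v / g" using u0[OF x] g by (auto simp: field_simps)
    ultimately show "2 \<le> card {a\<in>D. ?v = a \<or> ?v = g * a}" by simp
  qed
  have "D \<noteq> {}" using g by (auto simp: D_def)
  from avg[OF _ this finite_torus k] obtain a where a: "a \<in> D"
    and ab: "2 * card (torus n :: (nat \<Rightarrow> 'a) set) \<le> card D * card {x\<in>torus n. u x = a \<or> u x = g * a}"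
    by auto
  define b where "b = g * a"
  have a0: "a \<noteq> 0" using a by (simp add: D_def)
  define c where "c p = (if p = p2 then 1 else if p = p1 then - (a + b) else if p = p0 then a * b else 0)"
    for p :: "nat \<Rightarrow> int"
  have pe: "poly_eval n P c x = a * b * monomial_eval n p0 x - (a + b) * monomial_eval n p1 x
      + monomial_eval n p2 x" for x
  proof -
    have sub: "{p0,p1,p2} \<subseteq> lattice_pts n P" using pts by auto
    have z: "\<forall>p\<in>lattice_pts n P - {p0,p1,p2}. c p * monomial_eval n p x = 0"
    proof
      fix p assume "p \<in> lattice_pts n P - {p0,p1,p2}"
      then have "p \<noteq> p0" "p \<noteq> p1" "p \<noteq> p2" by auto
      then show "c p * monomial_eval n p x = 0" by (simp add: c_def)
    qed
    have "poly_eval n P c x = (\<Sum>p\<in>{p0,p1,p2}. c p * monomial_eval n p x)"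
      unfolding poly_eval_def by (rule sum.mono_neutral_right[OF L sub z])
    also have "\<dots> = a * b * monomial_eval n p0 x - (a + b) * monomial_eval n p1 x
      + monomial_eval n p2 x" using dist by (simp add: c_def algebra_simps)
    finally show ?thesis .
  qed
  have zs: "zero_set n P c = {x\<in>torus n. u x = a \<or> u x = g * a}"
  proof -
    have "poly_eval n P c x = 0 \<longleftrightarrow> (u x = a \<or> u x = g * a)" if x: "x \<in> torus n" for x
    proof -
      let ?m0 = "monomial_eval n p0 x" and ?m1 = "monomial_eval n p1 x" and ?m2 = "monomial_eval n p2 x"
      have m0: "?m0 \<noteq> 0" using mono_nonzero[OF x] .
      have m2: "?m2 = ?m1 * ?m1 / ?m0" using rel x m0 by (simp add: field_simps)
      have "poly_eval n P c x = ?m0 * ((u x - a) * (u x - b))"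
        unfolding pe m2 u_def using m0 by (simp add: field_simps)
      then show ?thesis using m0 by (simp add: b_def)
    qed
    then show ?thesis unfolding zero_set_def by auto
  qed
  have le0: "card (zero_set n P c) \<le> max_zeros TYPE('a) n P"
    by (rule mz_ge) (use pts(3) in \<open>auto simp: c_def\<close>)
  have le: "card {x\<in>torus n. u x = a \<or> u x = g * a} \<le> max_zeros TYPE('a) n P"
    using le0 unfolding zs .
  have "2 * ?T^n \<le> ?T * card {x\<in>torus n. u x = a \<or> u x = g * a}"
    using ab unfolding card_torus cD .
  also have "\<dots> \<le> ?T * max_zeros TYPE('a) n P" by (rule mult_left_mono[OF le]) simp
  finally show ?thesis .
qed


lemma sq_bound:
  fixes P :: "(nat \<Rightarrow> real) set"
  assumes q3: "CARD('a::{finite,field}) \<ge> 3" and L: "finite (lattice_pts n P)"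
    and pts: "p00 \<in> lattice_pts n P" "p10 \<in> lattice_pts n P" "p01 \<in> lattice_pts n P" "p11 \<in> lattice_pts n P"
    and dist: "p00 \<noteq> p10" "p00 \<noteq> p01" "p00 \<noteq> p11" "p10 \<noteq> p01" "p10 \<noteq> p11" "p01 \<noteq> p11"
    and rel: "\<forall>x\<in>torus n. monomial_eval n p00 x * monomial_eval n p11 x =
                 monomial_eval n p10 x * (monomial_eval n p01 (x :: nat \<Rightarrow> 'a))"
  shows "2 * real ((CARD('a) - 1)^n) \<le> (real (CARD('a) - 1) + 1) * real (max_zeros TYPE('a) n P)"
proof -
  let ?T = "CARD('a) - 1"
  define u1 where "u1 x = monomial_eval n p10 x / monomial_eval n p00 x" for x :: "nat \<Rightarrow> 'a"
  define u2 where "u2 x = monomial_eval n p01 x / monomial_eval n p00 x" for x :: "nat \<Rightarrow> 'a"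
  have u0: "u1 x \<noteq> 0" "u2 x \<noteq> 0" if "x \<in> torus n" for x
    using mono_nonzero[OF that] by (simp_all add: u1_def u2_def)
  define D0 where "D0 = (UNIV :: 'a set) - {0}"
  have cD0: "card D0 = ?T" by (simp add: D0_def card_Diff_singleton)
  define D where "D = D0 \<times> D0"
  have cD: "card D = ?T * ?T" by (simp add: D_def cD0)
  have T2: "?T \<ge> 2" using q3 by simp
  have k: "\<forall>x\<in>(torus n :: (nat \<Rightarrow> 'a) set). 2 * ?T - 1 \<le> card {d\<in>D. u1 x = fst d \<or> u2 x = snd d}"
  proof
    fix x :: "nat \<Rightarrow> 'a" assume x: "x \<in> torus n"
    have "{d\<in>D. u1 x = fst d \<or> u2 x = snd d} = ({u1 x} \<times> D0) \<union> ((D0 - {u1 x}) \<times> {u2 x})"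
      using u0[OF x] by (auto simp: D_def D0_def)
    moreover have "card (({u1 x} \<times> D0) \<union> ((D0 - {u1 x}) \<times> {u2 x})) = ?T + (?T - 1)"
    proof -
      have "card (({u1 x} \<times> D0) \<union> ((D0 - {u1 x}) \<times> {u2 x})) = card ({u1 x} \<times> D0) + card ((D0 - {u1 x}) \<times> {u2 x})"
        by (rule card_Un_disjoint) auto
      also have "card ({u1 x} \<times> D0) = ?T" by (simp add: card_cartesian_product cD0)
      also have "card ((D0 - {u1 x}) \<times> {u2 x}) = ?T - 1"
        using u0[OF x] by (simp add: card_cartesian_product card_Diff_singleton D0_def cD0[unfolded D0_def])
      finally show ?thesis .
    qed
    ultimately show "2 * ?T - 1 \<le> card {d\<in>D. u1 x = fst d \<or> u2 x = snd d}" using T2 by simp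
  qed
  have "(1,1) \<in> D" by (simp add: D_def D0_def)
  then have "D \<noteq> {}" by blast
  from avg[OF _ this finite_torus k] obtain d where d: "d \<in> D"
    and ab: "(2 * ?T - 1) * card (torus n :: (nat \<Rightarrow> 'a) set) \<le> card D * card {x\<in>torus n. u1 x = fst d \<or> u2 x = snd d}"
    by (auto simp: D_def)
  define a where "a = fst d"
  define b where "b = snd d"
  define c where "c p = (if p = p11 then 1 else if p = p10 then - b else if p = p01 then - a
     else if p = p00 then a * b else 0)" for p :: "nat \<Rightarrow> int"
  have pe: "poly_eval n P c x = a * b * monomial_eval n p00 x - b * monomial_eval n p10 x
      - a * monomial_eval n p01 x + monomial_eval n p11 x" for x
  proof -
    have sub: "{p00,p10,p01,p11} \<subseteq> lattice_pts n P" using pts by auto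
    have z: "\<forall>p\<in>lattice_pts n P - {p00,p10,p01,p11}. c p * monomial_eval n p x = 0"
    proof
      fix p assume "p \<in> lattice_pts n P - {p00,p10,p01,p11}"
      then have "p \<noteq> p00" "p \<noteq> p10" "p \<noteq> p01" "p \<noteq> p11" by auto
      then show "c p * monomial_eval n p x = 0" by (simp add: c_def)
    qed
    have "poly_eval n P c x = (\<Sum>p\<in>{p00,p10,p01,p11}. c p * monomial_eval n p x)"
      unfolding poly_eval_def by (rule sum.mono_neutral_right[OF L sub z])
    also have "\<dots> = a * b * monomial_eval n p00 x - b * monomial_eval n p10 x
      - a * monomial_eval n p01 x + monomial_eval n p11 x" using dist by (simp add: c_def algebra_simps)
    finally show ?thesis .
  qed
  have zs: "zero_set n P c = {x\<in>torus n. u1 x = a \<or> u2 x = b}"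
  proof -
    have "poly_eval n P c x = 0 \<longleftrightarrow> (u1 x = a \<or> u2 x = b)" if x: "x \<in> torus n" for x
    proof -
      let ?m0 = "monomial_eval n p00 x" and ?m1 = "monomial_eval n p10 x"
        and ?m2 = "monomial_eval n p01 x" and ?m3 = "monomial_eval n p11 x"
      have m0: "?m0 \<noteq> 0" using mono_nonzero[OF x] .
      have m3: "?m3 = ?m1 * ?m2 / ?m0" using rel x m0 by (simp add: field_simps)
      have "poly_eval n P c x = ?m0 * ((u1 x - a) * (u2 x - b))"
        unfolding pe m3 u1_def u2_def using m0 by (simp add: field_simps)
      then show ?thesis using m0 by simp
    qed
    then show ?thesis unfolding zero_set_def by auto
  qed
  have le0: "card (zero_set n P c) \<le> max_zeros TYPE('a) n P"
    by (rule mz_ge) (use pts(4) in \<open>auto simp: c_def\<close>)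
  have le: "card {x\<in>torus n. u1 x = fst d \<or> u2 x = snd d} \<le> max_zeros TYPE('a) n P"
    using le0 unfolding zs a_def b_def .
  have h1: "(2 * ?T - 1) * ?T^n \<le> (?T * ?T) * max_zeros TYPE('a) n P"
    using ab mult_left_mono[OF le, of "?T * ?T"] unfolding card_torus cD by linarith
  define N where "N = max_zeros TYPE('a) n P"
  define A where "A = ?T ^ n"
  define t where "t = real ?T"
  have t2: "t \<ge> 2" using T2 unfolding t_def by simp
  have A0: "real A \<ge> 0" by simp
  have h1': "(2 * t - 1) * real A \<le> (t * t) * real N"
  proof -
    have "real ((2 * ?T - 1) * ?T^n) \<le> real ((?T * ?T) * N)" using h1 unfolding N_def of_nat_le_iff .
    then have "real (2 * ?T - 1) * real A \<le> (t * t) * real N" unfolding of_nat_mult A_def t_def .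
    moreover have "real (2 * ?T - 1) = 2 * t - 1" using T2 unfolding t_def by (simp add: of_nat_diff)
    ultimately show ?thesis by simp
  qed
  have "(t * t) * (2 * real A) \<le> (t + 1) * ((2 * t - 1) * real A)"
  proof -
    have "(t + 1) * (2 * t - 1) - 2 * (t * t) = t - 1" by (simp add: algebra_simps)
    then have "(t * t) * 2 \<le> (t + 1) * (2 * t - 1)" using t2 by linarith
    from mult_right_mono[OF this A0] show ?thesis by (simp add: algebra_simps)
  qed
  also have "\<dots> \<le> (t + 1) * ((t * t) * real N)" using h1' t2 by (intro mult_left_mono) auto
  finally have "(t * t) * (2 * real A) \<le> (t * t) * ((t + 1) * real N)" by (simp add: algebra_simps)
  then have "2 * real A \<le> (t + 1) * real N" using t2 by (simp add: mult_le_cancel_left_pos)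
  then show ?thesis unfolding A_def t_def N_def by simp
qed


definition pt :: "nat \<Rightarrow> (nat \<Rightarrow> nat \<Rightarrow> int) \<Rightarrow> (nat \<Rightarrow> int) \<Rightarrow> int \<Rightarrow> int \<Rightarrow> nat \<Rightarrow> int" where
  "pt n M lam a b = (\<lambda>i. if i < n then lam i + a * M i 0 + b * M i 1 else 0)"

lemma sum_e:
  fixes f :: "nat \<Rightarrow> 'b::comm_ring_1"
  assumes "1 \<le> n" "b = 0 \<or> 2 \<le> n"
  shows "(\<Sum>j<n. f j * (if j = 0 then a else if j = 1 then b else 0)) = f 0 * a + f 1 * b"
proof -
  have "(\<Sum>j<n. f j * (if j = 0 then a else if j = 1 then b else 0)) =
      (\<Sum>j<n. (if j = 0 then f 0 * a else 0) + (if j = 1 then f 1 * b else 0))"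
    by (intro sum.cong) auto
  also have "\<dots> = (\<Sum>j<n. if j = 0 then f 0 * a else 0) + (\<Sum>j<n. if j = 1 then f 1 * b else 0)"
    by (rule sum.distrib)
  also have "\<dots> = f 0 * a + f 1 * b" using assms by (auto simp: sum.delta)
  finally show ?thesis .
qed

lemma uv_eq: "(\<lambda>i. real_of_int a * Defs.unit_vec 0 i + real_of_int b * Defs.unit_vec 1 i) =
   (\<lambda>i. if i = 0 then real_of_int a else if i = 1 then real_of_int b else 0)"
  by (auto simp: unit_vec_def)

lemma aff_pt:
  assumes "1 \<le> n" "b = 0 \<or> 2 \<le> n"
  shows "aff_map n M lam (\<lambda>i. real_of_int a * Defs.unit_vec 0 i + real_of_int b * Defs.unit_vec 1 i) = rvec (pt n M lam a b)"
proof
  fix i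
  have "(\<Sum>j<n. real_of_int (M i j) * (if j = 0 then real_of_int a else if j = 1 then real_of_int b else 0))
      = real_of_int (M i 0) * real_of_int a + real_of_int (M i 1) * real_of_int b"
    by (rule sum_e) (use assms in auto)
  then show "aff_map n M lam (\<lambda>i. real_of_int a * Defs.unit_vec 0 i + real_of_int b * Defs.unit_vec 1 i) i = rvec (pt n M lam a b) i"
    unfolding uv_eq by (simp add: aff_map_def pt_def rvec_def ac_simps)
qed

lemma col_lemma:
  assumes U: "unimodular n M" and n: "1 \<le> n" "b = 0 \<or> 2 \<le> n" and ab: "a \<noteq> 0 \<or> b \<noteq> 0"
  shows "\<exists>i<n. a * M i 0 + b * M i 1 \<noteq> 0"
proof (rule ccontr)
  assume "\<not> ?thesis"
  then have z: "\<forall>i<n. a * M i 0 + b * M i 1 = 0" by simp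
  define x where "x j = (if j = 0 then real_of_int a else if j = 1 then real_of_int b else 0)" for j :: nat
  have "\<forall>i<n. (\<Sum>j<n. real_of_int (M i j) * x j) = 0"
  proof (intro allI impI)
    fix i assume "i < n"
    have "(\<Sum>j<n. real_of_int (M i j) * x j) = real_of_int (M i 0) * real_of_int a + real_of_int (M i 1) * real_of_int b"
      unfolding x_def by (rule sum_e) (use n in auto)
    also have "\<dots> = real_of_int (a * M i 0 + b * M i 1)" by (simp add: ac_simps)
    also have "\<dots> = 0" using z \<open>i < n\<close> by simp
    finally show "(\<Sum>j<n. real_of_int (M i j) * x j) = 0" .
  qed
  from unimod_inj[OF U this] have x0: "\<forall>k<n. x k = 0" by blast
  have "a = 0" using x0 n by (auto simp: x_def)
  moreover have "b = 0"
  proof (cases "b = 0")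
    case False
    then have "2 \<le> n" using n(2) by simp
    then have "x 1 = 0" using x0 by simp
    then show ?thesis by (simp add: x_def)
  qed
  ultimately show False using ab by simp
qed

lemma pt_ne:
  assumes U: "unimodular n M" and n: "1 \<le> n" "b = b' \<or> 2 \<le> n" and ab: "a \<noteq> a' \<or> b \<noteq> b'"
  shows "pt n M lam a b \<noteq> pt n M lam a' b'"
proof
  assume e: "pt n M lam a b = pt n M lam a' b'"
  obtain i where i: "i < n" "(a - a') * M i 0 + (b - b') * M i 1 \<noteq> 0"
    using col_lemma[OF U n(1), of "b - b'" "a - a'"] n ab by auto
  have "pt n M lam a b i = pt n M lam a' b' i" using e by simp
  then have "(a - a') * M i 0 + (b - b') * M i 1 = 0" using i(1) by (simp add: pt_def algebra_simps)
  with i show False by simp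
qed

lemma mono_mul:
  assumes "\<forall>i<n. 0 \<le> p i" "\<forall>i<n. 0 \<le> p' i"
  shows "monomial_eval n p x * monomial_eval n p' x = (\<Prod>i<n. (x i :: 'a::field) ^ nat (p i + p' i))"
  unfolding monomial_eval_def prod.distrib[symmetric]
  using assms by (intro prod.cong refl) (simp add: nat_add_distrib power_add)

lemma mono_rel:
  assumes "\<forall>i<n. 0 \<le> p i" "\<forall>i<n. 0 \<le> p' i" "\<forall>i<n. 0 \<le> r i" "\<forall>i<n. 0 \<le> r' i"
    and "\<forall>i<n. p i + p' i = r i + r' i"
  shows "monomial_eval n p x * monomial_eval n p' x = monomial_eval n r x * monomial_eval n r' (x :: nat \<Rightarrow> 'a::field)"
  unfolding mono_mul[OF assms(1,2)] mono_mul[OF assms(3,4)] using assms(5) by (intro prod.cong) auto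

lemma lower_bound:
  assumes q3: "CARD('a::{finite,field}) \<ge> 3"
    and P: "int_polytope n P" "P \<subseteq> box_n n (real CARD('a) - 2)" "contains_seg_or_square n P"
  shows "lattice_pts n P \<noteq> {} \<and> 2 * real ((CARD('a) - 1)^n) \<le> real CARD('a) * real (max_zeros TYPE('a) n P)"
proof -
  from P(3) have "\<exists>M lam. unimodular n M \<and> (\<forall>i\<ge>n. lam i = 0) \<and>
      ((1 \<le> n \<and> aff_map n M lam ` seg2 \<subseteq> P) \<or> (2 \<le> n \<and> aff_map n M lam ` unit_square \<subseteq> P))"
    unfolding contains_seg_or_square_def .
  then obtain M lam where H: "unimodular n M \<and> (\<forall>i\<ge>n. lam i = 0) \<and>
      ((1 \<le> n \<and> aff_map n M lam ` seg2 \<subseteq> P) \<or> (2 \<le> n \<and> aff_map n M lam ` unit_square \<subseteq> P))"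
    by (elim exE)
  have U: "unimodular n M" using H by simp
  have cases: "(1 \<le> n \<and> aff_map n M lam ` seg2 \<subseteq> P) \<or> (2 \<le> n \<and> aff_map n M lam ` unit_square \<subseteq> P)"
    using H by (elim conjE)
  have L: "finite (lattice_pts n P)" by (rule finite_lattice[OF P(2)])
  have lat: "pt n M lam a b \<in> lattice_pts n P"
    if "1 \<le> n" "b = 0 \<or> 2 \<le> n" "(\<lambda>i. real_of_int a * Defs.unit_vec 0 i + real_of_int b * Defs.unit_vec 1 i) \<in> S"
       "aff_map n M lam ` S \<subseteq> P" for a b S
  proof -
    have "aff_map n M lam (\<lambda>i. real_of_int a * Defs.unit_vec 0 i + real_of_int b * Defs.unit_vec 1 i) \<in> P"
      using subsetD[OF that(4) imageI[OF that(3)]] .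
    then have "rvec (pt n M lam a b) \<in> P" unfolding aff_pt[OF that(1,2), of M lam a] .
    then show ?thesis by (auto simp: lattice_pts_def pt_def)
  qed
  have nonneg: "\<forall>i<n. 0 \<le> p i" if "p \<in> lattice_pts n P" for p
    using lattice_box[OF P(2) that] by auto
  have qT: "real CARD('a) = real (CARD('a) - 1) + 1" using q3 by simp
  from cases show ?thesis
  proof
    assume "1 \<le> n \<and> aff_map n M lam ` seg2 \<subseteq> P"
    then have n1: "1 \<le> n" and sub: "aff_map n M lam ` seg2 \<subseteq> P" by auto
    have s0: "(\<lambda>i. real_of_int 0 * Defs.unit_vec 0 i + real_of_int 0 * Defs.unit_vec 1 i) \<in> seg2"
      unfolding seg2_def by (rule rconv_in) simp
    have s2: "(\<lambda>i. real_of_int 2 * Defs.unit_vec 0 i + real_of_int 0 * Defs.unit_vec 1 i) \<in> seg2"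
      unfolding seg2_def by (rule rconv_in) simp
    have s1: "(\<lambda>i. real_of_int 1 * Defs.unit_vec 0 i + real_of_int 0 * Defs.unit_vec 1 i) \<in> seg2"
    proof -
      let ?T = "{(\<lambda>i. 0), (\<lambda>i. 2 * Defs.unit_vec 0 i)} :: (nat \<Rightarrow> real) set"
      have ne: "(\<lambda>i::nat. 0::real) \<noteq> (\<lambda>i. 2 * Defs.unit_vec 0 i)"
      proof
        assume "(\<lambda>i::nat. 0::real) = (\<lambda>i. 2 * Defs.unit_vec 0 i)"
        then have "(0::real) = 2 * Defs.unit_vec 0 0" by (rule fun_cong)
        then show False by (simp add: unit_vec_def)
      qed
      have "\<forall>i. real_of_int 1 * Defs.unit_vec 0 i + real_of_int 0 * Defs.unit_vec 1 i = (\<Sum>t\<in>?T. (1/2) * t i)"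
        using ne by simp
      moreover have "sum (\<lambda>_. 1/2 :: real) ?T = 1" using ne by simp
      moreover have "finite ?T" "?T \<subseteq> {(\<lambda>i. 0), (\<lambda>i. 2 * Defs.unit_vec 0 i)}" "?T \<noteq> {}"
        "\<forall>t\<in>?T. 0 \<le> (\<lambda>_. 1/2 :: real) t" by simp_all
      ultimately show ?thesis unfolding seg2_def rconv_def
        by (intro CollectI exI[of _ ?T] exI[of _ "\<lambda>_. 1/2 :: real"] conjI)
    qed
    have p: "pt n M lam 0 0 \<in> lattice_pts n P" "pt n M lam 1 0 \<in> lattice_pts n P" "pt n M lam 2 0 \<in> lattice_pts n P"
      using lat[OF n1 _ s0 sub] lat[OF n1 _ s1 sub] lat[OF n1 _ s2 sub] by auto
    have d: "pt n M lam 0 0 \<noteq> pt n M lam 1 0" "pt n M lam 0 0 \<noteq> pt n M lam 2 0" "pt n M lam 1 0 \<noteq> pt n M lam 2 0"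
      by (rule pt_ne[OF U n1], simp, simp)+
    have rel: "\<forall>x\<in>torus n. monomial_eval n (pt n M lam 0 0) x * monomial_eval n (pt n M lam 2 0) x =
                 monomial_eval n (pt n M lam 1 0) x * (monomial_eval n (pt n M lam 1 0) (x :: nat \<Rightarrow> 'a))"
      by (intro ballI mono_rel nonneg p) (simp add: pt_def)
    have "2 * (CARD('a) - 1)^n \<le> (CARD('a) - 1) * max_zeros TYPE('a) n P"
      by (rule seg_bound[OF q3 L p d rel])
    then have "real (2 * (CARD('a) - 1)^n) \<le> real ((CARD('a) - 1) * max_zeros TYPE('a) n P)"
      by (simp only: of_nat_le_iff)
    then have "2 * real ((CARD('a) - 1)^n) \<le> real (CARD('a) - 1) * real (max_zeros TYPE('a) n P)"
      by (simp only: of_nat_mult of_nat_numeral)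
    also have "\<dots> \<le> real CARD('a) * real (max_zeros TYPE('a) n P)"
      by (intro mult_right_mono) auto
    finally have "2 * real ((CARD('a) - 1)^n) \<le> real CARD('a) * real (max_zeros TYPE('a) n P)" .
    moreover have "lattice_pts n P \<noteq> {}" using p(1) by blast
    ultimately show ?thesis by blast
  next
    assume "2 \<le> n \<and> aff_map n M lam ` unit_square \<subseteq> P"
    then have n2: "2 \<le> n" and sub: "aff_map n M lam ` unit_square \<subseteq> P" by auto
    have n1: "1 \<le> n" using n2 by simp
    have uq: "unit_square = rconv {(\<lambda>i. 0), Defs.unit_vec 0, Defs.unit_vec 1, (\<lambda>i. Defs.unit_vec 0 i + Defs.unit_vec 1 i)}"
      by (simp add: unit_square_def)
    have e00: "(\<lambda>i. real_of_int 0 * Defs.unit_vec 0 i + real_of_int 0 * Defs.unit_vec 1 i) = (\<lambda>i. 0)" by simp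
    have e10: "(\<lambda>i. real_of_int 1 * Defs.unit_vec 0 i + real_of_int 0 * Defs.unit_vec 1 i) = Defs.unit_vec 0" by (simp add: fun_eq_iff)
    have e01: "(\<lambda>i. real_of_int 0 * Defs.unit_vec 0 i + real_of_int 1 * Defs.unit_vec 1 i) = Defs.unit_vec 1" by (simp add: fun_eq_iff)
    have e11: "(\<lambda>i. real_of_int 1 * Defs.unit_vec 0 i + real_of_int 1 * Defs.unit_vec 1 i) = (\<lambda>i. Defs.unit_vec 0 i + Defs.unit_vec 1 i)" by simp
    have i00: "(\<lambda>i. real_of_int 0 * Defs.unit_vec 0 i + real_of_int 0 * Defs.unit_vec 1 i) \<in> unit_square"
      unfolding e00 uq by (rule rconv_in) simp
    have i10: "(\<lambda>i. real_of_int 1 * Defs.unit_vec 0 i + real_of_int 0 * Defs.unit_vec 1 i) \<in> unit_square"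
      unfolding e10 uq by (rule rconv_in) simp
    have i01: "(\<lambda>i. real_of_int 0 * Defs.unit_vec 0 i + real_of_int 1 * Defs.unit_vec 1 i) \<in> unit_square"
      unfolding e01 uq by (rule rconv_in) simp
    have i11: "(\<lambda>i. real_of_int 1 * Defs.unit_vec 0 i + real_of_int 1 * Defs.unit_vec 1 i) \<in> unit_square"
      unfolding e11 uq by (rule rconv_in) simp
    have n2': "(0::int) = 0 \<or> 2 \<le> n" "(1::int) = 0 \<or> 2 \<le> n" using n2 by simp_all
    have p: "pt n M lam 0 0 \<in> lattice_pts n P" "pt n M lam 1 0 \<in> lattice_pts n P"
        "pt n M lam 0 1 \<in> lattice_pts n P" "pt n M lam 1 1 \<in> lattice_pts n P"
      by (rule lat[OF n1 n2'(1) i00 sub], rule lat[OF n1 n2'(1) i10 sub],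
          rule lat[OF n1 n2'(2) i01 sub], rule lat[OF n1 n2'(2) i11 sub])
    have d: "pt n M lam 0 0 \<noteq> pt n M lam 1 0" "pt n M lam 0 0 \<noteq> pt n M lam 0 1"
      "pt n M lam 0 0 \<noteq> pt n M lam 1 1" "pt n M lam 1 0 \<noteq> pt n M lam 0 1"
      "pt n M lam 1 0 \<noteq> pt n M lam 1 1" "pt n M lam 0 1 \<noteq> pt n M lam 1 1"
      by (rule pt_ne[OF U n1], use n2 in simp, simp)+
    have rel: "\<forall>x\<in>torus n. monomial_eval n (pt n M lam 0 0) x * monomial_eval n (pt n M lam 1 1) x =
                 monomial_eval n (pt n M lam 1 0) x * (monomial_eval n (pt n M lam 0 1) (x :: nat \<Rightarrow> 'a))"
      by (intro ballI mono_rel nonneg p) (simp add: pt_def)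
    have "2 * real ((CARD('a) - 1)^n) \<le> (real (CARD('a) - 1) + 1) * real (max_zeros TYPE('a) n P)"
      by (rule sq_bound[OF q3 L p d rel])
    then have "2 * real ((CARD('a) - 1)^n) \<le> real CARD('a) * real (max_zeros TYPE('a) n P)"
      unfolding qT .
    moreover have "lattice_pts n P \<noteq> {}" using p(1) by blast
    ultimately show ?thesis by blast
  qed
qed




lemma zero_set_cong:
  "(\<forall>p\<in>lattice_pts n P. c p = c' p) \<Longrightarrow> zero_set n P c = zero_set n P c'"
  unfolding zero_set_def poly_eval_def by (simp cong: sum.cong)

lemma zero_set_zero:
  "(\<forall>p\<in>lattice_pts n P. c p = 0) \<Longrightarrow> zero_set n P c = torus n"
  unfolding zero_set_def poly_eval_def by simp

lemma F_bound:
  fixes T A B a b x y :: real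
  assumes "0 \<le> x" "x \<le> a" "a \<le> A" "0 \<le> y" "y \<le> b" "b \<le> B" "0 \<le> T"
    and AB: "A * B \<le> T*a*b + (A-a)*(B-b)"
  shows "T*x*y + (A-x)*(B-y) \<le> T*a*b + (A-a)*(B-b)"
proof -
  have lin1: "T*x*y + (A-x)*(B-y) \<le> max (T*0*y + (A-0)*(B-y)) (T*a*y + (A-a)*(B-y))"
  proof (cases "(T+1)*y - B \<ge> 0")
    case True
    have "(T*a*y + (A-a)*(B-y)) - (T*x*y + (A-x)*(B-y)) = (a - x) * ((T+1)*y - B)" by (simp add: algebra_simps)
    moreover have "(a - x) * ((T+1)*y - B) \<ge> 0" using True assms by simp
    ultimately show ?thesis by linarith
  next
    case False
    have "(T*0*y + (A-0)*(B-y)) - (T*x*y + (A-x)*(B-y)) = x * (B - (T+1)*y)" by (simp add: algebra_simps)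
    moreover have "x * (B - (T+1)*y) \<ge> 0" using False assms by simp
    ultimately show ?thesis by linarith
  qed
  have lin2: "T*a*y + (A-a)*(B-y) \<le> max (T*a*0 + (A-a)*(B-0)) (T*a*b + (A-a)*(B-b))"
  proof (cases "(T+1)*a - A \<ge> 0")
    case True
    have "(T*a*b + (A-a)*(B-b)) - (T*a*y + (A-a)*(B-y)) = (b - y) * ((T+1)*a - A)" by (simp add: algebra_simps)
    moreover have "(b - y) * ((T+1)*a - A) \<ge> 0" using True assms by simp
    ultimately show ?thesis by linarith
  next
    case False
    have "(T*a*0 + (A-a)*(B-0)) - (T*a*y + (A-a)*(B-y)) = y * (A - (T+1)*a)" by (simp add: algebra_simps)
    moreover have "y * (A - (T+1)*a) \<ge> 0" using False assms by simp
    ultimately show ?thesis by linarith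
  qed
  have "A*(B-y) \<le> A*B" using assms by (simp add: mult_left_mono)
  moreover have "(A-a)*B \<le> A*B" using assms by (simp add: mult_right_mono)
  ultimately show ?thesis using lin1 lin2 AB by (simp add: max_def split: if_splits)
qed

lemma anti_max:
  fixes K x y :: real
  assumes "K > 0"
  shows "(K - max x y) / K = min ((K - x)/K) ((K - y)/K)"
proof -
  have mono: "(K-v)/K \<le> (K-u)/K" if "u \<le> v" for u v
    using assms that by (simp add: divide_right_mono)
  show ?thesis
  proof (cases "x \<le> y")
    case True
    then show ?thesis using mono[OF True] by (simp add: max_def min_def)
  next
    case False
    then have "y \<le> x" by simp
    then show ?thesis using mono[OF \<open>y \<le> x\<close>] False by (simp add: max_def min_def)
  qed
qed

theorem mainTheorem6:
  fixes n m :: nat and P Q :: "(nat \<Rightarrow> real) set"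
  assumes q3: "CARD('a::{finite,field}) \<ge> 3"
    and P: "int_polytope n P" "P \<subseteq> box_n n (real CARD('a) - 2)" "contains_seg_or_square n P"
    and Q: "int_polytope m Q" "Q \<subseteq> box_n m (real CARD('a) - 2)" "contains_seg_or_square m Q"
  shows "(real ((CARD('a) - 1) ^ (n + m)) \<le>
           real (CARD('a) - 1) * real (max_zeros TYPE('a) n P) * real (max_zeros TYPE('a) m Q)
           + (real ((CARD('a) - 1) ^ n) - real (max_zeros TYPE('a) n P))
             * (real ((CARD('a) - 1) ^ m) - real (max_zeros TYPE('a) m Q)))
         \<and> (min_dist TYPE('a) (n + m + 1) (join n m P Q) =
           Min {min_dist TYPE('a) n P, min_dist TYPE('a) m Q,
                min_dist TYPE('a) n P + min_dist TYPE('a) m Q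
                - min_dist TYPE('a) n P * min_dist TYPE('a) m Q * real CARD('a) / real (CARD('a) - 1)})"
proof -
  define T where "T = CARD('a) - 1"
  define A where "A = T ^ n"
  define B where "B = T ^ m"
  define a where "a = max_zeros TYPE('a) n P"
  define b where "b = max_zeros TYPE('a) m Q"
  define J where "J = join n m P Q"
  define NJ where "NJ = max_zeros TYPE('a) (n+m+1) J"
  have T2: "T \<ge> 2" using q3 by (simp add: T_def)
  have qT: "real CARD('a) = real T + 1" using q3 by (simp add: T_def)
  have Apos: "A > 0" "B > 0" using T2 by (simp_all add: A_def B_def)
  note LBP = lower_bound[OF q3 P] and LBQ = lower_bound[OF q3 Q]
  have LPne: "lattice_pts n P \<noteq> {}" and LQne: "lattice_pts m Q \<noteq> {}" using LBP LBQ by auto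
  have aA: "a \<le> A" using mz_le[OF LPne] by (simp add: a_def A_def T_def)
  have bB: "b \<le> B" using mz_le[OF LQne] by (simp add: b_def B_def T_def)
  have la0: "2 * real A \<le> real CARD('a) * real a"
    using LBP unfolding T_def[symmetric] A_def[symmetric] a_def[symmetric] by simp
  have lb0: "2 * real B \<le> real CARD('a) * real b"
    using LBQ unfolding T_def[symmetric] B_def[symmetric] b_def[symmetric] by simp
  have la: "2 * real A \<le> (real T + 1) * real a" using la0 unfolding qT .
  have lb: "2 * real B \<le> (real T + 1) * real b" using lb0 unfolding qT .
  have part1: "real A * real B \<le> real T * real a * real b + (real A - real a) * (real B - real b)"
  proof -
    have "real b * (2 * real A) \<le> real b * ((real T + 1) * real a)" using la by (simp add: mult_left_mono)
    moreover have "real a * (2 * real B) \<le> real a * ((real T + 1) * real b)" using lb by (simp add: mult_left_mono)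
    ultimately show ?thesis by (simp add: algebra_simps)
  qed
  have AB: "real ((CARD('a) - 1) ^ (n + m)) = real A * real B" by (simp add: A_def B_def T_def power_add)
  define F where "F = real T * real a * real b + (real A - real a) * (real B - real b)"
  have fin: "finite (lattice_pts n P)" "finite (lattice_pts m Q)"
    using finite_lattice P(2) Q(2) by blast+
  have zP: "\<forall>i\<ge>n. p i = 0" if "p \<in> lattice_pts n P" for p using lattice_box[OF P(2) that] by auto
  have zQ: "\<forall>i\<ge>m. q i = 0" if "q \<in> lattice_pts m Q" for q using lattice_box[OF Q(2) that] by auto
  have JL: "lattice_pts (n+m+1) J = lattice_pts n P \<union> eQ n m ` lattice_pts m Q"
    unfolding J_def by (rule join_lattice[OF P(1,2) Q(1,2)])
  have count: "real (card (zero_set (n+m+1) J c)) =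
      real T * real (card (zero_set n P c)) * real (card (zero_set m Q (c \<circ> eQ n m)))
      + (real A - real (card (zero_set n P c))) * (real B - real (card (zero_set m Q (c \<circ> eQ n m))))"
    for c :: "(nat \<Rightarrow> int) \<Rightarrow> 'a"
  proof -
    have "card (zero_set n P c) \<le> A" "card (zero_set m Q (c \<circ> eQ n m)) \<le> B"
      using card_zero_set_le by (auto simp: A_def B_def T_def)
    then show ?thesis unfolding J_def join_count[OF P(1,2) Q(1,2)]
      by (simp add: of_nat_diff A_def B_def T_def)
  qed
  have up: "real NJ \<le> max (max (real a * real T * real B) (real b * real T * real A)) F"
  proof -
    have "lattice_pts (n+m+1) J \<noteq> {}" using JL LPne by auto
    from mz_ex[OF this] obtain c :: "(nat \<Rightarrow> int) \<Rightarrow> 'a" where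
      c: "\<exists>p\<in>lattice_pts (n+m+1) J. c p \<noteq> 0" "card (zero_set (n+m+1) J c) = NJ"
      unfolding NJ_def by blast
    define Zg where "Zg = card (zero_set n P c)"
    define Zh where "Zh = card (zero_set m Q (c \<circ> eQ n m))"
    have cnt: "real NJ = real T * real Zg * real Zh + (real A - real Zg) * (real B - real Zh)"
      using count[of c] c(2) by (simp add: Zg_def Zh_def)
    have ZgA: "Zg \<le> A" "Zh \<le> B" using card_zero_set_le by (auto simp: Zg_def Zh_def A_def B_def T_def)
    show ?thesis
    proof (cases "\<exists>p\<in>lattice_pts n P. c p \<noteq> 0")
      case cP: True
      show ?thesis
      proof (cases "\<exists>q\<in>lattice_pts m Q. (c \<circ> eQ n m) q \<noteq> 0")
        case True
        have "Zg \<le> a" using mz_ge[OF cP] by (simp add: Zg_def a_def)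
        moreover have "Zh \<le> b" using mz_ge[OF True] unfolding Zh_def b_def comp_def .
        ultimately have "real NJ \<le> F" unfolding cnt F_def
          by (intro F_bound) (use aA bB part1 in auto)
        then show ?thesis by simp
      next
        case False
        then have "zero_set m Q (c \<circ> eQ n m) = torus m" by (intro zero_set_zero) auto
        then have "Zh = B" by (simp add: Zh_def card_torus B_def T_def)
        moreover have "Zg \<le> a" using mz_ge[OF cP] by (simp add: Zg_def a_def)
        ultimately have "real NJ \<le> real a * real T * real B" unfolding cnt
          using mult_right_mono[of "real Zg" "real a" "real T * real B"] by (simp add: ac_simps)
        then show ?thesis by simp
      qed
    next
      case False
      then have "zero_set n P c = torus n" by (intro zero_set_zero) auto
      then have "Zg = A" by (simp add: Zg_def card_torus A_def T_def)
      from c(1) obtain r where r: "r \<in> lattice_pts (n+m+1) J" "c r \<noteq> 0" by blast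
      then have "r \<in> eQ n m ` lattice_pts m Q" using JL False by auto
      then have cQ: "\<exists>q\<in>lattice_pts m Q. (c \<circ> eQ n m) q \<noteq> 0" using r by auto
      have "Zh \<le> b" using mz_ge[OF cQ] unfolding Zh_def b_def comp_def .
      then have "real NJ \<le> real b * real T * real A" unfolding cnt \<open>Zg = A\<close>
        using mult_right_mono[of "real Zh" "real b" "real T * real A"] by (simp add: ac_simps)
      then show ?thesis by simp
    qed
  qed
  obtain cP :: "(nat \<Rightarrow> int) \<Rightarrow> 'a" where cP: "\<exists>p\<in>lattice_pts n P. cP p \<noteq> 0" "card (zero_set n P cP) = a"
    using mz_ex[OF LPne] unfolding a_def by blast
  obtain cQ :: "(nat \<Rightarrow> int) \<Rightarrow> 'a" where cQ: "\<exists>p\<in>lattice_pts m Q. cQ p \<noteq> 0" "card (zero_set m Q cQ) = b"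
    using mz_ex[OF LQne] unfolding b_def by blast
  have comb: "real NJ \<ge> real T * real (card (zero_set n P c1)) * real (card (zero_set m Q c2))
      + (real A - real (card (zero_set n P c1))) * (real B - real (card (zero_set m Q c2)))"
    if nz: "(\<exists>p\<in>lattice_pts n P. c1 p \<noteq> 0) \<or> (\<exists>p\<in>lattice_pts m Q. c2 p \<noteq> 0)"
    for c1 c2 :: "(nat \<Rightarrow> int) \<Rightarrow> 'a"
  proof -
    define c where "c r = (if r (n+m) = 1 then c2 (s2 n m r) else c1 r)" for r :: "nat \<Rightarrow> int"
    have e1: "zero_set n P c = zero_set n P c1"
    proof (rule zero_set_cong, intro ballI)
      fix p assume "p \<in> lattice_pts n P"
      then have "p (n+m) = 0" using zP by simp
      then show "c p = c1 p" by (simp add: c_def)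
    qed
    have e2: "zero_set m Q (c \<circ> eQ n m) = zero_set m Q c2"
    proof (rule zero_set_cong, intro ballI)
      fix p assume "p \<in> lattice_pts m Q"
      then have "s2 n m (eQ n m p) = p" using zQ s2_eQ by blast
      moreover have "eQ n m p (n+m) = 1" by (simp add: eQ_def)
      ultimately show "(c \<circ> eQ n m) p = c2 p" by (simp add: c_def)
    qed
    have "\<exists>p\<in>lattice_pts (n+m+1) J. c p \<noteq> 0"
      using nz
    proof
      assume "\<exists>p\<in>lattice_pts n P. c1 p \<noteq> 0"
      then obtain p where "p \<in> lattice_pts n P" "c1 p \<noteq> 0" by blast
      then show ?thesis using zP[of p] JL by (intro bexI[of _ p]) (auto simp: c_def)
    next
      assume "\<exists>p\<in>lattice_pts m Q. c2 p \<noteq> 0"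
      then obtain p where "p \<in> lattice_pts m Q" "c2 p \<noteq> 0" by blast
      then show ?thesis using zQ[of p] JL s2_eQ[of m p n]
        by (intro bexI[of _ "eQ n m p"]) (auto simp: c_def eQ_def)
    qed
    from mz_ge[OF this] have "card (zero_set (n+m+1) J c) \<le> NJ" unfolding NJ_def .
    then show ?thesis using count[of c] unfolding e1 e2 by linarith
  qed
  have g1: "real NJ \<ge> F"
    using comb[of cP cQ] cP cQ unfolding F_def by auto
  have g2: "real NJ \<ge> real a * real T * real B"
  proof -
    have cz: "card (zero_set m Q (\<lambda>_. 0::'a)) = B"
      by (simp add: zero_set_zero card_torus B_def T_def)
    have h: "real NJ \<ge> real T * real a * real B + (real A - real a) * (real B - real B)"
      using comb[of cP "\<lambda>_. 0"] cP(1) unfolding cz cP(2) by blast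
    then show ?thesis by (simp add: ac_simps)
  qed
  have g3: "real NJ \<ge> real b * real T * real A"
  proof -
    have cz: "card (zero_set n P (\<lambda>_. 0::'a)) = A"
      by (simp add: zero_set_zero card_torus A_def T_def)
    have h: "real NJ \<ge> real T * real A * real b + (real A - real A) * (real B - real b)"
      using comb[of "\<lambda>_. 0" cQ] cQ(1) unfolding cz cQ(2) by blast
    then show ?thesis by (simp add: ac_simps)
  qed
  have NJeq: "real NJ = max (max (real a * real T * real B) (real b * real T * real A)) F"
    using up g1 g2 g3 by linarith
  define K where "K = real A * real B * real T"
  have Kpos: "K > 0" using Apos T2 by (simp add: K_def)
  have KJ: "real ((CARD('a) - 1) ^ (n+m+1)) = K"
    by (simp add: K_def A_def B_def T_def power_add)
  have dJ: "min_dist TYPE('a) (n+m+1) J = (K - real NJ) / K"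
    unfolding min_dist_def NJ_def KJ by simp
  have dP: "min_dist TYPE('a) n P = (real A - real a) / real A"
    unfolding min_dist_def a_def A_def T_def by simp
  have dQ: "min_dist TYPE('a) m Q = (real B - real b) / real B"
    unfolding min_dist_def b_def B_def T_def by simp
  have d1: "(K - real a * real T * real B) / K = (real A - real a) / real A"
    using Apos T2 by (simp add: K_def field_simps)
  have d2: "(K - real b * real T * real A) / K = (real B - real b) / real B"
    using Apos T2 by (simp add: K_def field_simps)
  have d3: "(K - F) / K = (real A - real a) / real A + (real B - real b) / real B
      - (real A - real a) / real A * ((real B - real b) / real B) * real CARD('a) / real (CARD('a) - 1)"
    using Apos T2 unfolding qT T_def[symmetric] by (simp add: K_def F_def field_simps)
  have "min_dist TYPE('a) (n + m + 1) (join n m P Q) =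
      min (min ((K - real a * real T * real B) / K) ((K - real b * real T * real A) / K)) ((K - F)/K)"
    unfolding J_def[symmetric] dJ NJeq anti_max[OF Kpos] ..
  also have "\<dots> = Min {min_dist TYPE('a) n P, min_dist TYPE('a) m Q,
                min_dist TYPE('a) n P + min_dist TYPE('a) m Q
                - min_dist TYPE('a) n P * min_dist TYPE('a) m Q * real CARD('a) / real (CARD('a) - 1)}"
    unfolding d1 d2 d3 dP dQ by (simp add: min.assoc)
  finally have part2: "min_dist TYPE('a) (n + m + 1) (join n m P Q) = Min {min_dist TYPE('a) n P, min_dist TYPE('a) m Q,
                min_dist TYPE('a) n P + min_dist TYPE('a) m Q
                - min_dist TYPE('a) n P * min_dist TYPE('a) m Q * real CARD('a) / real (CARD('a) - 1)}" .
  show ?thesis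
    using part1 part2 unfolding AB A_def B_def a_def b_def T_def by simp
qed


end
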